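(* Assume $a_T/T\to0$. Let $\hat c\in\mathcal C$ satisfy the out-of-sample guarantee with speed $(a_T)$. Then for all $x\in\mathcal X$ and $\mathbb P\in\mathcal P^o$, $$\liminf_{T\to\infty}\sqrt{\tfrac{T}{a_T}}\big(\hat c(x,\mathbb P,T)-c(x,\mathbb P)\big)\ \ge\ \limsup_{T\to\infty}\sqrt{\tfrac{T}{a_T}}\,\big|\hat c_{\mathrm V}(x,\mathbb P,T)-c(x,\mathbb P)\big|=\sqrt{2\,\mathrm{Var}_{\mathbb P}(\ell(x,\xi))},$$ where $\hat c_{\mathrm V}(x,\mathbb P,T)=c(x,\mathbb P)+\sqrt{\frac{2a_T}{T}\mathrm{Var}_{\mathbb P}(\ell(x,\xi))}$.
   Context: Setting: $\Sigma=\{1,\dots,d\}$ ($d\ge2$) is finite; $\mathcal P\subset\mathbb R^d$ is the probability simplex over $\Sigma$ and $\mathcal P^o$ its relative interior (all entries positive). $\mathcal X\subset\mathbb R^n$ is compact and $\ell:\mathcal X\times\Sigma\to\mathbb R$ is continuous in $x$ for each $i$. For $x\in\mathcal X$, $\mu\in\mathbb R^d$ let $c(x,\mu)=\sum_{i\in\Sigma}\ell(x,i)\mu(i)$, and $\mathrm{Var}_{\mathbb P}(\ell(x,\xi))=\sum_i\mathbb P(i)(\ell(x,i)-c(x,\mathbb P))^2$. Data $\xi_1,\xi_2,\dots$ are i.i.d. with law $\mathbb P\in\mathcal P$, $\mathbb P^\infty$ denotes their joint law, and $\hat{\mathbb P}_T(i)=\frac1T\sum_{t=1}^T\mathbf 1\{\xi_t=i\}$.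 $(a_T)_{T\ge1}$ is a sequence of positive reals with $a_T\to\infty$. A predictor is a sequence $\hat c=(\hat c(\cdot,\cdot,T))_{T\in\mathbb N}$ of functions $\mathcal X\times\mathcal P\to\mathbb R$. It is regular, written $\hat c\in\mathcal C$, if (i) the sequence $(\hat c(\cdot,\cdot,T))_T$ is uniformly bounded and equicontinuous on $\mathcal X\times\mathcal P$, and (ii) each $\hat c(x,\cdot,T)$ is differentiable in $\mathbb P$ and the sequence of derivative maps $(x,\mathbb P)\mapsto\nabla_{\mathbb P}\hat c(x,\mathbb P,T)$ is uniformly bounded and equicontinuous. (A sequence $(f_T)$ is equicontinuous if for every point $y$ and $\varepsilon>0$ there is a neighbourhood $U$ of $y$ with $|f_T(y)-f_T(z)|<\varepsilon$ for all $z\in U$ and all $T$.) Out-of-sample guarantee with speed $(a_T)$: for all $x\in\mathcal X$ and $\mathbb P\in\mathcal P^o$, $\limsup_{T\to\infty}\frac1{a_T}\log\mathbb P^\infty\big(c(x,\mathbb P)>\hat c(x,\hat{\mathbb P}_T,T)\big)\le-1$. *)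

theory Defs
  imports "HOL-Analysis.Analysis" "HOL-Probability.Probability"
begin

text \<open>The finite alphabet Sigma is the finite type 'd; distributions are vectors in real^'d.\<close>

definition prob_simplex :: "(real^'d) set" where
  "prob_simplex = {P. (\<forall>i. 0 \<le> P $ i) \<and> (\<Sum>i\<in>UNIV. P $ i) = 1}"

definition prob_simplex_interior :: "(real^'d) set" where
  "prob_simplex_interior = {P. (\<forall>i. 0 < P $ i) \<and> (\<Sum>i\<in>UNIV. P $ i) = 1}"

definition cost :: "('x \<Rightarrow> 'd::finite \<Rightarrow> real) \<Rightarrow> 'x \<Rightarrow> real^'d \<Rightarrow> real" where
  "cost l x \<mu> = (\<Sum>i\<in>UNIV. l x i * \<mu> $ i)"

definition variance_loss :: "('x \<Rightarrow> 'd::finite \<Rightarrow> real) \<Rightarrow> 'x \<Rightarrow> real^'d \<Rightarrow> real" where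
  "variance_loss l x P = (\<Sum>i\<in>UNIV. P $ i * (l x i - cost l x P)\<^sup>2)"

definition law :: "real^'d \<Rightarrow> 'd::finite measure" where
  "law P = point_measure UNIV (\<lambda>i. ennreal (P $ i))"

text \<open>Joint law P^infinity of the i.i.d. sequence xi_1, xi_2, ... (xi_t = w !! (t-1)).\<close>
definition law_inf :: "real^'d \<Rightarrow> 'd::finite stream measure" where
  "law_inf P = stream_space (law P)"

definition empirical :: "nat \<Rightarrow> 'd::finite stream \<Rightarrow> real^'d" where
  "empirical T w = (\<chi> i. real (card {t. t < T \<and> w !! t = i}) / real T)"

definition eln :: "real \<Rightarrow> ereal" where
  "eln p = (if p = 0 then -\<infinity> else ereal (ln p))"

definition equicont_on :: "('a::metric_space) set \<Rightarrow> (nat \<Rightarrow> 'a \<Rightarrow> 'b::metric_space) \<Rightarrow> bool" where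
  "equicont_on S f = (\<forall>y\<in>S. \<forall>e>0. \<exists>\<delta>>0. \<forall>T\<ge>1. \<forall>z\<in>S. dist z y < \<delta> \<longrightarrow> dist (f T y) (f T z) < e)"

definition unif_bounded_on :: "'a set \<Rightarrow> (nat \<Rightarrow> 'a \<Rightarrow> 'b::real_normed_vector) \<Rightarrow> bool" where
  "unif_bounded_on S f = (\<exists>B. \<forall>T\<ge>1. \<forall>y\<in>S. norm (f T y) \<le> B)"

definition regular_predictor :: "(real^'n) set \<Rightarrow> (real^'n \<Rightarrow> real^'d \<Rightarrow> nat \<Rightarrow> real) \<Rightarrow> bool" where
  "regular_predictor X chat =
     (unif_bounded_on (X \<times> prob_simplex) (\<lambda>T (x,P). chat x P T) \<and>
      equicont_on (X \<times> prob_simplex) (\<lambda>T (x,P). chat x P T) \<and>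
      (\<exists>g :: real^'n \<Rightarrow> real^'d \<Rightarrow> nat \<Rightarrow> real^'d.
         (\<forall>T\<ge>1. \<forall>x\<in>X. \<forall>P\<in>prob_simplex.
            ((\<lambda>Q. chat x Q T) has_derivative (\<lambda>h. g x P T \<bullet> h)) (at P within prob_simplex)) \<and>
         unif_bounded_on (X \<times> prob_simplex) (\<lambda>T (x,P). g x P T) \<and>
         equicont_on (X \<times> prob_simplex) (\<lambda>T (x,P). g x P T)))"

definition out_of_sample_guarantee ::
  "(real^'n) set \<Rightarrow> (real^'n \<Rightarrow> 'd::finite \<Rightarrow> real) \<Rightarrow> (real^'n \<Rightarrow> real^'d \<Rightarrow> nat \<Rightarrow> real) \<Rightarrow> (nat \<Rightarrow> real) \<Rightarrow> bool" where
  "out_of_sample_guarantee X l chat a =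
     (\<forall>x\<in>X. \<forall>P\<in>prob_simplex_interior.
        limsup (\<lambda>T. eln (measure (law_inf P)
                   {w \<in> space (law_inf P). cost l x P > chat x (empirical T w) T}) / ereal (a T))
        \<le> -1)"

definition chat_V :: "(real^'n \<Rightarrow> 'd::finite \<Rightarrow> real) \<Rightarrow> (nat \<Rightarrow> real) \<Rightarrow> real^'n \<Rightarrow> real^'d \<Rightarrow> nat \<Rightarrow> real" where
  "chat_V l a x P T = cost l x P + sqrt (2 * a T / real T * variance_loss l x P)"

end

theory Submission
  imports Defs
begin

fun W :: "real^'d \<Rightarrow> nat \<Rightarrow> ('d::finite list \<Rightarrow> real) \<Rightarrow> real" where
  "W P 0 f = f []"
| "W P (Suc T) f = (\<Sum>i\<in>UNIV. P$i * W P T (\<lambda>v. f (i # v)))"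

lemma W_nonneg:
  assumes "\<And>i. P$i \<ge> 0" "\<And>u. f u \<ge> 0" shows "W P T f \<ge> 0"
  using assms(2) by (induction T arbitrary: f) (auto intro!: sum_nonneg mult_nonneg_nonneg assms(1))

lemma W_mono:
  assumes "\<And>i. P$i \<ge> 0" "\<And>u. f u \<le> g u" shows "W P T f \<le> W P T g"
  using assms(2) by (induction T arbitrary: f g) (auto intro!: sum_mono mult_left_mono assms(1))

lemma W_add: "W P T (\<lambda>u. f u + g u) = W P T f + W P T g"
  by (induction T arbitrary: f g) (auto simp: distrib_left sum.distrib)

lemma W_cmult: "W P T (\<lambda>u. c * f u) = c * W P T f"
  by (induction T arbitrary: f) (auto simp: sum_distrib_left mult_ac)

lemma W_zero: "W P T (\<lambda>u. 0) = 0"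
  by (induction T) auto

lemma W_sum: "finite I \<Longrightarrow> W P T (\<lambda>u. \<Sum>k\<in>I. f k u) = (\<Sum>k\<in>I. W P T (f k))"
  by (induction I rule: finite_induct) (auto simp: W_add W_zero)

lemma W_const: "(\<Sum>i\<in>UNIV. P$i) = 1 \<Longrightarrow> W P T (\<lambda>u. c) = c"
  by (induction T) (auto simp: sum_distrib_right[symmetric])

lemma sets_law: "sets (law P) = sets (count_space UNIV)"
  by (simp add: law_def sets_point_measure)

lemma space_law[simp]: "space (law P) = UNIV"
  by (simp add: law_def space_point_measure)

lemma prob_space_law:
  assumes "P \<in> prob_simplex" shows "prob_space (law P)"
proof
  have "emeasure (law P) UNIV = (\<Sum>i\<in>UNIV. ennreal (P$i))"
    unfolding law_def by (rule emeasure_point_measure_finite) auto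
  also have "\<dots> = ennreal (\<Sum>i\<in>UNIV. P$i)"
    using assms by (subst sum_ennreal) (auto simp: prob_simplex_def)
  also have "\<dots> = 1" using assms by (simp add: prob_simplex_def)
  finally show "emeasure (law P) (space (law P)) = 1" by simp
qed

lemma meas_stake_fun:
  "(\<lambda>w. g (stake T w)) \<in> measurable (stream_space (law P)) (count_space UNIV)"
proof -
  have "(\<lambda>w. g (stake T w)) \<in> measurable (stream_space (count_space UNIV)) (count_space UNIV)"
    by measurable
  then show ?thesis
    by (subst measurable_cong_sets[OF sets_stream_space_cong[OF sets_law] refl])
qed

lemma meas_stake_borel:
  "(\<lambda>w. g (stake T w)) \<in> borel_measurable (stream_space (law P))"
  by (rule measurable_compose[OF meas_stake_fun[of "\<lambda>x. x" T P]]) simp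

lemma W_nn_integral:
  assumes P: "P \<in> prob_simplex" and f: "\<And>u. f u \<ge> 0"
  shows "(\<integral>\<^sup>+w. ennreal (f (stake T w)) \<partial>law_inf P) = ennreal (W P T f)"
  using f
proof (induction T arbitrary: f)
  case 0
  interpret S: prob_space "law_inf P" unfolding law_inf_def
    using prob_space.prob_space_stream_space[OF prob_space_law[OF P]] .
  show ?case by (simp add: S.emeasure_space_1)
next
  case (Suc T)
  interpret L: prob_space "law P" by (rule prob_space_law[OF P])
  have Wnn: "\<And>g. (\<And>u. g u \<ge> 0) \<Longrightarrow> W P T g \<ge> 0"
    using P by (intro W_nonneg) (auto simp: prob_simplex_def)
  have "(\<integral>\<^sup>+w. ennreal (f (stake (Suc T) w)) \<partial>law_inf P)
     = (\<integral>\<^sup>+x. (\<integral>\<^sup>+X. ennreal (f (stake (Suc T) (x ## X))) \<partial>law_inf P) \<partial>law P)"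
    unfolding law_inf_def by (rule L.nn_integral_stream_space) (rule meas_stake_borel)
  also have "\<dots> = (\<integral>\<^sup>+x. ennreal (W P T (\<lambda>v. f (x # v))) \<partial>law P)"
    using Suc.IH[of "\<lambda>v. f (_ # v)"] Suc.prems by simp
  also have "\<dots> = (\<Sum>i\<in>UNIV. ennreal (P$i) * ennreal (W P T (\<lambda>v. f (i # v))))"
    unfolding law_def by (rule nn_integral_point_measure_finite) simp
  also have "\<dots> = ennreal (W P (Suc T) f)"
    using P Wnn Suc.prems
    by (auto simp: ennreal_mult[symmetric] prob_simplex_def intro!: sum_ennreal)
  finally show ?case .
qed

definition cnt :: "'d \<Rightarrow> 'd list \<Rightarrow> nat" where
  "cnt i u = length (filter (\<lambda>j. j = i) u)"

lemma cnt_Cons: "cnt i (j # v) = cnt i v + (if j = i then 1 else 0)"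
  by (simp add: cnt_def)

definition emp :: "nat \<Rightarrow> 'd::finite list \<Rightarrow> real^'d" where
  "emp T u = (\<chi> i. real (cnt i u) / real T)"

lemma empirical_stake: "empirical T w = emp T (stake T w)"
proof -
  have "card {t. t < T \<and> w !! t = i} = cnt i (stake T w)" for i
    unfolding cnt_def length_filter_conv_card by (rule arg_cong[where f=card]) auto
  then show ?thesis by (simp add: empirical_def emp_def)
qed

lemma sum_if_eq: "(\<Sum>j\<in>UNIV. (Q::real^'d::finite)$j * (if j = i then a else b)) = Q$i * (a - b) + (\<Sum>j\<in>UNIV. Q$j) * b"
proof -
  have "(\<Sum>j\<in>UNIV. Q$j * (if j = i then a else b)) = (\<Sum>j\<in>UNIV. Q$j * b + (if j = i then Q$j * (a - b) else 0))"
    by (intro sum.cong) (auto simp: right_diff_distrib)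
  also have "\<dots> = (\<Sum>j\<in>UNIV. Q$j) * b + Q$i * (a - b)"
    by (simp add: sum.distrib sum_distrib_right)
  finally show ?thesis by (simp add: right_diff_distrib)
qed

lemma W_cnt_sq:
  assumes "(\<Sum>j\<in>UNIV. Q$j) = 1"
  shows "W Q T (\<lambda>u. (real (cnt i u) + c)\<^sup>2) = (c + T * Q$i)\<^sup>2 + T * Q$i * (1 - Q$i)"
proof (induction T arbitrary: c)
  case 0 then show ?case by (simp add: cnt_def)
next
  case (Suc T)
  have e: "\<And>j. (\<lambda>v. (real (cnt i (j # v)) + c)\<^sup>2) = (\<lambda>v. (real (cnt i v) + (c + (if j = i then 1 else 0)))\<^sup>2)"
    by (auto simp: cnt_Cons fun_eq_iff add_ac)
  have "W Q (Suc T) (\<lambda>u. (real (cnt i u) + c)\<^sup>2)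
      = (\<Sum>j\<in>UNIV. Q$j * W Q T (\<lambda>v. (real (cnt i v) + (c + (if j = i then 1 else 0)))\<^sup>2))"
    by (simp only: W.simps e)
  also have "\<dots> = (\<Sum>j\<in>UNIV. Q$j * (if j = i then (c + 1 + T * Q$i)\<^sup>2 + T * Q$i * (1 - Q$i)
                    else (c + T * Q$i)\<^sup>2 + T * Q$i * (1 - Q$i)))"
  proof (intro sum.cong refl)
    fix j show "Q$j * W Q T (\<lambda>v. (real (cnt i v) + (c + (if j = i then 1 else 0)))\<^sup>2) =
       Q$j * (if j = i then (c + 1 + T * Q$i)\<^sup>2 + T * Q$i * (1 - Q$i)
                    else (c + T * Q$i)\<^sup>2 + T * Q$i * (1 - Q$i))"
      using Suc.IH[of "c+1"] Suc.IH[of c] by (cases "j = i") simp_all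
  qed
  also have "\<dots> = (c + real (Suc T) * Q$i)\<^sup>2 + real (Suc T) * Q$i * (1 - Q$i)"
    by (subst sum_if_eq) (simp add: assms power2_eq_square algebra_simps)
  finally show ?case .
qed

definition LR :: "real^'d \<Rightarrow> real^'d \<Rightarrow> 'd::finite list \<Rightarrow> real" where
  "LR P Q u = (\<Prod>j\<in>UNIV. (P$j / Q$j) ^ cnt j u)"

lemma LR_Cons: "Q$i \<noteq> 0 \<Longrightarrow> LR P Q (i # v) = (P$i / Q$i) * LR P Q v"
proof -
  have "LR P Q (i # v) = (\<Prod>j\<in>UNIV. (P$j / Q$j) ^ cnt j v * (if j = i then P$i / Q$i else 1))"
    unfolding LR_def by (intro prod.cong) (auto simp: cnt_Cons)
  also have "\<dots> = LR P Q v * (\<Prod>j\<in>UNIV. (if j = i then P$i / Q$i else 1))"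
    by (simp add: prod.distrib LR_def)
  also have "\<dots> = (P$i / Q$i) * LR P Q v"
    by (subst prod.delta) auto
  finally show ?thesis .
qed

lemma W_change:
  assumes "\<And>j. Q$j > 0"
  shows "W P T f = W Q T (\<lambda>u. f u * LR P Q u)"
proof (induction T arbitrary: f)
  case 0 then show ?case by (simp add: LR_def cnt_def)
next
  case (Suc T)
  have "Q$i * W Q T (\<lambda>v. f (i # v) * LR P Q (i # v)) = P$i * W P T (\<lambda>v. f (i # v))" for i
  proof -
    have "(\<lambda>v. f (i # v) * LR P Q (i # v)) = (\<lambda>v. (P$i / Q$i) * (f (i # v) * LR P Q v))"
      using assms[of i] by (auto simp: LR_Cons fun_eq_iff)
    then have "Q$i * W Q T (\<lambda>v. f (i # v) * LR P Q (i # v)) = Q$i * (P$i / Q$i) * W Q T (\<lambda>v. f (i # v) * LR P Q v)"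
      by (simp only: W_cmult mult.assoc)
    also have "\<dots> = P$i * W P T (\<lambda>v. f (i # v))"
      using assms[of i] by (simp add: Suc.IH[symmetric])
    finally show ?thesis .
  qed
  then show ?case by simp
qed

lemma LR_exp:
  assumes "\<And>j. Q$j > 0" "\<And>j. P$j > 0"
  shows "LR P Q u = exp (- (\<Sum>j\<in>UNIV. real (cnt j u) * ln (Q$j / P$j)))"
proof -
  have "LR P Q u = (\<Prod>j\<in>UNIV. exp (- (real (cnt j u) * ln (Q$j / P$j))))"
    unfolding LR_def
  proof (intro prod.cong refl)
    fix j
    have "(P$j / Q$j) ^ cnt j u = exp (real (cnt j u) * ln (P$j / Q$j))"
      using assms[of j] by (simp add: exp_of_nat_mult)
    also have "ln (P$j / Q$j) = - ln (Q$j / P$j)"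
      using assms[of j] by (simp add: ln_div)
    finally show "(P$j / Q$j) ^ cnt j u = exp (- (real (cnt j u) * ln (Q$j / P$j)))" by simp
  qed
  also have "\<dots> = exp (- (\<Sum>j\<in>UNIV. real (cnt j u) * ln (Q$j / P$j)))"
    by (simp add: exp_sum[symmetric] sum_negf)
  finally show ?thesis .
qed

lemma measure_emp:
  assumes P: "P \<in> prob_simplex"
  shows "measure (law_inf P) {w \<in> space (law_inf P). \<Phi> (empirical T w)}
         = W P T (\<lambda>u. if \<Phi> (emp T u) then 1 else 0)"
proof -
  let ?S = "{w \<in> space (law_inf P). \<Phi> (empirical T w)}"
  have "Measurable.pred (law_inf P) (\<lambda>w. \<Phi> (emp T (stake T w)))"
    unfolding law_inf_def
    using pred_sets1[where M="count_space UNIV" and P="\<lambda>x. x", OF _ meas_stake_fun[of "\<lambda>u. \<Phi> (emp T u)" T P]]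
    by simp
  then have S: "?S \<in> sets (law_inf P)"
    by (simp add: Measurable.pred_def empirical_stake)
  have "emeasure (law_inf P) ?S = (\<integral>\<^sup>+w. indicator ?S w \<partial>law_inf P)"
    using S by simp
  also have "\<dots> = (\<integral>\<^sup>+w. ennreal (if \<Phi> (emp T (stake T w)) then 1 else 0) \<partial>law_inf P)"
    by (intro nn_integral_cong) (auto simp: indicator_def empirical_stake)
  also have "\<dots> = ennreal (W P T (\<lambda>u. if \<Phi> (emp T u) then 1 else 0))"
    by (rule W_nn_integral[OF P]) auto
  finally have "emeasure (law_inf P) ?S = ennreal (W P T (\<lambda>u. if \<Phi> (emp T u) then 1 else 0))" .
  moreover have "W P T (\<lambda>u. if \<Phi> (emp T u) then 1 else 0) \<ge> 0"
    using P by (intro W_nonneg) (auto simp: prob_simplex_def)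
  ultimately show ?thesis by (simp add: measure_def)
qed

lemma W_lower:
  fixes P Q :: "real^'d::finite"
  assumes P: "\<And>j. P$j > 0" and Q: "\<And>j. Q$j > 0" and sQ: "(\<Sum>j\<in>UNIV. Q$j) = 1"
    and rho: "\<rho> > 0" and T: "T \<ge> 1"
  shows "W P T (\<lambda>u. if (\<forall>j. \<bar>real (cnt j u) / real T - Q$j\<bar> < \<rho>) then 1 else 0)
    \<ge> exp (- real T * (\<Sum>j\<in>UNIV. Q$j * ln (Q$j / P$j)) - real T * \<rho> * (\<Sum>j\<in>UNIV. \<bar>ln (Q$j / P$j)\<bar>))
       * (1 - real CARD('d) / (real T * \<rho>\<^sup>2))"
proof -
  define L where "L j = ln (Q$j / P$j)" for j
  define A where "A u = (\<forall>j. \<bar>real (cnt j u) / real T - Q$j\<bar> < \<rho>)" for u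
  define E where "E = exp (- real T * (\<Sum>j\<in>UNIV. Q$j * L j) - real T * \<rho> * (\<Sum>j\<in>UNIV. \<bar>L j\<bar>))"
  define ind where "ind u = (if A u then 1 else 0::real)" for u
  have Tpos: "real T > 0" using T by simp
  have Q0: "\<And>j. Q$j \<ge> 0" using Q less_imp_le by blast
  have "W P T ind = W Q T (\<lambda>u. ind u * LR P Q u)"
    by (rule W_change[OF Q])
  also have "\<dots> \<ge> W Q T (\<lambda>u. E * ind u)"
  proof (rule W_mono[OF Q0])
    fix u
    show "E * ind u \<le> ind u * LR P Q u"
    proof (cases "A u")
      case True
      have "(\<Sum>j\<in>UNIV. (real (cnt j u) - real T * Q$j) * L j) \<le> (\<Sum>j\<in>UNIV. real T * \<rho> * \<bar>L j\<bar>)"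
      proof (rule sum_mono)
        fix j
        have "\<bar>real (cnt j u) - real T * Q$j\<bar> = real T * \<bar>real (cnt j u) / real T - Q$j\<bar>"
          using Tpos by (simp add: abs_mult[symmetric] field_simps)
        also have "\<dots> \<le> real T * \<rho>"
          using True Tpos unfolding A_def by (intro mult_left_mono) (auto intro: less_imp_le)
        finally have "\<bar>real (cnt j u) - real T * Q$j\<bar> \<le> real T * \<rho>" .
        then have "\<bar>(real (cnt j u) - real T * Q$j) * L j\<bar> \<le> real T * \<rho> * \<bar>L j\<bar>"
          by (simp add: abs_mult mult_right_mono)
        then show "(real (cnt j u) - real T * Q$j) * L j \<le> real T * \<rho> * \<bar>L j\<bar>" by linarith
      qed
      moreover have "(\<Sum>j\<in>UNIV. (real (cnt j u) - real T * Q$j) * L j) = (\<Sum>j\<in>UNIV. real (cnt j u) * L j) - real T * (\<Sum>j\<in>UNIV. Q$j * L j)"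
        unfolding left_diff_distrib sum_subtractf by (simp add: sum_distrib_left mult_ac)
      moreover have "(\<Sum>j\<in>UNIV. real T * \<rho> * \<bar>L j\<bar>) = real T * \<rho> * (\<Sum>j\<in>UNIV. \<bar>L j\<bar>)"
        by (simp add: sum_distrib_left)
      ultimately have "- (\<Sum>j\<in>UNIV. real (cnt j u) * L j) \<ge> - real T * (\<Sum>j\<in>UNIV. Q$j * L j) - real T * \<rho> * (\<Sum>j\<in>UNIV. \<bar>L j\<bar>)"
        by linarith
      then have "E \<le> LR P Q u"
        unfolding E_def LR_exp[OF Q P] L_def by simp
      then show ?thesis using True by (simp add: ind_def)
    next
      case False
      then show ?thesis by (simp add: ind_def LR_def)
    qed
  qed
  also have "W Q T (\<lambda>u. E * ind u) = E * W Q T ind" by (rule W_cmult)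
  finally have 1: "W P T ind \<ge> E * W Q T ind" .
  define c where "c = - 1 / (real T * \<rho>)\<^sup>2"
  have "W Q T ind \<ge> W Q T (\<lambda>u. 1 + c * (\<Sum>j\<in>UNIV. (real (cnt j u) + - (real T * Q$j))\<^sup>2))"
  proof (rule W_mono[OF Q0])
    fix u
    have Sn: "(\<Sum>j\<in>UNIV. (real (cnt j u) + - (real T * Q$j))\<^sup>2) \<ge> 0" by (auto intro: sum_nonneg)
    have c0: "c \<le> 0" by (simp add: c_def)
    show "1 + c * (\<Sum>j\<in>UNIV. (real (cnt j u) + - (real T * Q$j))\<^sup>2) \<le> ind u"
    proof (cases "A u")
      case True then show ?thesis using Sn c0 by (simp add: ind_def mult_nonpos_nonneg)
    next
      case False
      then obtain j where j: "\<bar>real (cnt j u) / real T - Q$j\<bar> \<ge> \<rho>" unfolding A_def by (auto simp: not_less)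
      have "\<bar>real (cnt j u) + - (real T * Q$j)\<bar> = real T * \<bar>real (cnt j u) / real T - Q$j\<bar>"
        using Tpos by (simp add: abs_mult[symmetric] field_simps)
      also have "\<dots> \<ge> real T * \<rho>" using j Tpos by simp
      finally have "(real T * \<rho>)\<^sup>2 \<le> (real (cnt j u) + - (real T * Q$j))\<^sup>2"
        using rho Tpos by (metis abs_le_square_iff abs_of_pos mult_pos_pos)
      also have "\<dots> \<le> (\<Sum>j\<in>UNIV. (real (cnt j u) + - (real T * Q$j))\<^sup>2)"
        by (rule member_le_sum) auto
      finally have "1 \<le> (\<Sum>j\<in>UNIV. (real (cnt j u) + - (real T * Q$j))\<^sup>2) / (real T * \<rho>)\<^sup>2"
        using rho Tpos by simp
      then show ?thesis using False by (simp add: ind_def c_def)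
    qed
  qed
  also have "W Q T (\<lambda>u. 1 + c * (\<Sum>j\<in>UNIV. (real (cnt j u) + - (real T * Q$j))\<^sup>2))
       = 1 + c * (\<Sum>j\<in>UNIV. real T * Q$j * (1 - Q$j))"
  proof -
    have "\<And>j. W Q T (\<lambda>u. (real (cnt j u) - real T * Q$j)\<^sup>2) = real T * Q$j * (1 - Q$j)"
      using W_cnt_sq[OF sQ, of T _ "- (real T * Q$_)"] by simp
    then show ?thesis by (simp add: W_add W_const[OF sQ] W_cmult W_sum)
  qed
  finally have 2: "W Q T ind \<ge> 1 + c * (\<Sum>j\<in>UNIV. real T * Q$j * (1 - Q$j))" .
  have "(\<Sum>j\<in>UNIV. real T * Q$j * (1 - Q$j)) \<le> (\<Sum>j\<in>(UNIV::'d set). real T)"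
  proof (rule sum_mono)
    fix j
    have "Q$j * (1 - Q$j) \<le> 1"
    proof -
      have "0 \<le> (Q$j - 1/2)\<^sup>2" by simp
      then show ?thesis by (simp add: power2_eq_square algebra_simps)
    qed
    then show "real T * Q$j * (1 - Q$j) \<le> real T"
      using Tpos mult_left_mono[of "Q$j * (1 - Q$j)" 1 "real T"] by (simp add: mult_ac)
  qed
  then have "c * (\<Sum>j\<in>UNIV. real T * Q$j * (1 - Q$j)) \<ge> c * (real CARD('d) * real T)"
    by (intro mult_left_mono_neg) (auto simp: c_def)
  also have "c * (real CARD('d) * real T) = - real CARD('d) / (real T * \<rho>\<^sup>2)"
    using Tpos rho by (simp add: c_def power2_eq_square field_simps)
  finally have 3: "W Q T ind \<ge> 1 - real CARD('d) / (real T * \<rho>\<^sup>2)" using 2 by simp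
  have "E \<ge> 0" by (simp add: E_def)
  then have "W P T ind \<ge> E * (1 - real CARD('d) / (real T * \<rho>\<^sup>2))"
    using 1 3 by (meson mult_left_mono order_trans)
  moreover have "ind = (\<lambda>u. if (\<forall>j. \<bar>real (cnt j u) / real T - Q$j\<bar> < \<rho>) then 1 else 0)"
    by (auto simp: ind_def A_def fun_eq_iff)
  ultimately show ?thesis by (simp add: E_def L_def)
qed


lemma xlnx_bound:
  fixes d :: real assumes "\<bar>d\<bar> \<le> 1/2"
  shows "(1 + d) * ln (1 + d) \<le> d + d\<^sup>2 / 2 + 2 * \<bar>d\<bar>^3"
proof -
  define \<phi> where "\<phi> y = (1 + y) * ln (1 + y) - y - y\<^sup>2 / 2" for y :: real
  have der: "DERIV \<phi> y :> ln (1 + y) - y" if "\<bar>y\<bar> \<le> 1/2" for y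
  proof -
    have "1 + y > 0" using that by linarith
    have d1: "((\<lambda>z. 1 + z) has_real_derivative 1) (at y)" by (auto intro!: derivative_eq_intros)
    have d2: "((\<lambda>z. ln (1 + z)) has_real_derivative 1 / (1 + y)) (at y)"
      using \<open>1 + y > 0\<close> by (auto intro!: derivative_eq_intros)
    have d3: "((\<lambda>z. z\<^sup>2 / 2) has_real_derivative y) (at y)" by (auto intro!: derivative_eq_intros)
    have "DERIV \<phi> y :> 1 * ln (1 + y) + 1 / (1 + y) * (1 + y) - 1 - y"
      unfolding \<phi>_def by (intro DERIV_diff DERIV_mult d1 d2 d3 DERIV_ident)
    then show ?thesis using \<open>1 + y > 0\<close> by simp
  qed
  have dbound: "\<bar>ln (1 + y) - y\<bar> \<le> 2 * d\<^sup>2" if "\<bar>y\<bar> \<le> \<bar>d\<bar>" for y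
  proof -
    have "\<bar>ln (1 + y) - y\<bar> \<le> 2 * y\<^sup>2"
      using that assms by (intro abs_ln_one_plus_x_minus_x_bound) linarith
    also have "y\<^sup>2 \<le> d\<^sup>2" using that by (simp add: abs_le_square_iff)
    finally show ?thesis by simp
  qed
  have "\<phi> d \<le> 2 * \<bar>d\<bar>^3"
  proof (cases "d = 0")
    case True then show ?thesis by (simp add: \<phi>_def)
  next
    case False
    then have "d < 0 \<or> 0 < d" by linarith
    then obtain z where z: "\<bar>z\<bar> \<le> \<bar>d\<bar>" and eq: "\<phi> d - \<phi> 0 = d * (ln (1 + z) - z)"
    proof
      assume "d < 0"
      from MVT2[of d 0 \<phi> "\<lambda>y. ln (1 + y) - y"] this der assms
      obtain z where "d < z" "z < 0" "\<phi> 0 - \<phi> d = (0 - d) * (ln (1 + z) - z)" by fastforce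
      then show ?thesis using that[of z] by auto
    next
      assume "0 < d"
      from MVT2[of 0 d \<phi> "\<lambda>y. ln (1 + y) - y"] this der assms
      obtain z where "0 < z" "z < d" "\<phi> d - \<phi> 0 = (d - 0) * (ln (1 + z) - z)" by fastforce
      then show ?thesis using that[of z] by auto
    qed
    have "\<phi> d = d * (ln (1 + z) - z)" using eq by (simp add: \<phi>_def)
    also have "\<dots> \<le> \<bar>d\<bar> * (2 * d\<^sup>2)"
    proof -
      have "d * (ln (1 + z) - z) \<le> \<bar>d\<bar> * \<bar>ln (1 + z) - z\<bar>" by (simp add: abs_mult[symmetric])
      also have "\<dots> \<le> \<bar>d\<bar> * (2 * d\<^sup>2)" using dbound[OF z] by (intro mult_left_mono) auto
      finally show ?thesis .
    qed
    also have "\<dots> = 2 * \<bar>d\<bar>^3"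
    proof -
      have "d\<^sup>2 = \<bar>d\<bar> * \<bar>d\<bar>" by (simp add: power2_eq_square)
      then show ?thesis by (simp add: power3_eq_cube)
    qed
    finally show ?thesis .
  qed
  then show ?thesis by (simp add: \<phi>_def)
qed

lemma abs_ln_bound:
  fixes d :: real assumes "\<bar>d\<bar> \<le> 1/2"
  shows "\<bar>ln (1 + d)\<bar> \<le> 2 * \<bar>d\<bar>"
proof -
  have "\<bar>ln (1 + d) - d\<bar> \<le> 2 * d\<^sup>2" by (rule abs_ln_one_plus_x_minus_x_bound[OF assms])
  also have "2 * d\<^sup>2 \<le> \<bar>d\<bar>"
  proof -
    have "d\<^sup>2 = \<bar>d\<bar> * \<bar>d\<bar>" by (simp add: power2_eq_square)
    moreover have "\<bar>d\<bar> * \<bar>d\<bar> \<le> (1/2) * \<bar>d\<bar>" using assms by (intro mult_right_mono) auto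
    ultimately show ?thesis by linarith
  qed
  finally show ?thesis by linarith
qed

lemma W_mono_len:
  assumes "\<And>i. P$i \<ge> 0" "\<And>u. length u = T \<Longrightarrow> f u \<le> g u" shows "W P T f \<le> W P T g"
  using assms(2) by (induction T arbitrary: f g) (auto intro!: sum_mono mult_left_mono assms(1))

lemma sum_cnt: "(\<Sum>j\<in>UNIV. real (cnt j (u::'d::finite list))) = real (length u)"
proof (induction u)
  case Nil then show ?case by (simp add: cnt_def)
next
  case (Cons i v)
  have "(\<Sum>j\<in>UNIV. real (cnt j (i # v))) = (\<Sum>j\<in>UNIV. real (cnt j v) + (if i = j then 1 else 0))"
    by (intro sum.cong) (auto simp: cnt_Cons)
  also have "\<dots> = real (length v) + 1" by (simp add: sum.distrib Cons.IH sum.delta)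
  finally show ?case by simp
qed

lemma emp_simplex: "length u = T \<Longrightarrow> T \<ge> 1 \<Longrightarrow> emp T u \<in> prob_simplex"
  unfolding prob_simplex_def emp_def
  by (auto simp: sum_divide_distrib[symmetric] sum_cnt)

lemma norm_le_card:
  fixes v :: "real^'d::finite"
  assumes "\<And>j. \<bar>v$j\<bar> < \<rho>"
  shows "norm v \<le> real CARD('d) * \<rho>"
proof -
  have "norm v \<le> (\<Sum>j\<in>UNIV. \<bar>v$j\<bar>)" by (rule norm_le_l1_cart)
  also have "\<dots> \<le> (\<Sum>j\<in>(UNIV::'d set). \<rho>)" by (intro sum_mono) (auto intro: less_imp_le assms)
  finally show ?thesis by simp
qed

lemma simplex_convex:
  assumes "P \<in> prob_simplex" "Q \<in> prob_simplex" "0 \<le> t" "t \<le> 1"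
  shows "P + t *\<^sub>R (Q - P) \<in> prob_simplex"
proof -
  have "P + t *\<^sub>R (Q - P) = (1 - t) *\<^sub>R P + t *\<^sub>R Q" by (simp add: algebra_simps)
  moreover have "(1 - t) *\<^sub>R P + t *\<^sub>R Q \<in> prob_simplex"
    using assms unfolding prob_simplex_def
    by (auto simp: sum.distrib sum_distrib_left[symmetric] intro!: add_nonneg_nonneg mult_nonneg_nonneg)
  ultimately show ?thesis by simp
qed

lemma frequently_subseq:
  assumes "strict_mono \<sigma>" "eventually (\<lambda>n. Q (\<sigma> n)) sequentially"
  shows "frequently Q sequentially"
  unfolding frequently_sequentially
proof
  fix N
  from assms(2) obtain M where M: "\<And>n. n \<ge> M \<Longrightarrow> Q (\<sigma> n)" by (auto simp: eventually_sequentially)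
  have "\<sigma> (max M N) \<ge> N" using seq_suble[OF assms(1), of "max M N"] by simp
  then show "\<exists>n\<ge>N. Q n" using M[of "max M N"] by auto
qed


locale thm7 =
  fixes X :: "(real^'n) set" and l :: "real^'n \<Rightarrow> 'd::finite \<Rightarrow> real"
    and chat :: "real^'n \<Rightarrow> real^'d \<Rightarrow> nat \<Rightarrow> real" and a :: "nat \<Rightarrow> real"
    and g :: "real^'n \<Rightarrow> real^'d \<Rightarrow> nat \<Rightarrow> real^'d"
  assumes a_pos: "\<And>T. T \<ge> 1 \<Longrightarrow> a T > 0"
    and a_inf: "filterlim a at_top sequentially"
    and a_sublin: "(\<lambda>T. a T / real T) \<longlonglongrightarrow> 0"
    and chat_eqc: "equicont_on (X \<times> prob_simplex) (\<lambda>T (x,P). chat x P T)"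
    and g_der: "\<forall>T\<ge>1. \<forall>x\<in>X. \<forall>P\<in>prob_simplex.
            ((\<lambda>Q. chat x Q T) has_derivative (\<lambda>h. g x P T \<bullet> h)) (at P within prob_simplex)"
    and g_bdd: "unif_bounded_on (X \<times> prob_simplex) (\<lambda>T (x,P). g x P T)"
    and g_eqc: "equicont_on (X \<times> prob_simplex) (\<lambda>T (x,P). g x P T)"
    and guarantee: "out_of_sample_guarantee X l chat a"
begin

lemma guar_contra:
  assumes x: "x \<in> X" and P: "P \<in> prob_simplex_interior" and K: "K < 1"
    and fr: "frequently (\<lambda>T. T \<ge> 1 \<and> measure (law_inf P) {w \<in> space (law_inf P). cost l x P > chat x (empirical T w) T}
                  \<ge> exp (- a T * K) / 2) sequentially"
  shows False
proof -
  define m where "m T = measure (law_inf P) {w \<in> space (law_inf P). cost l x P > chat x (empirical T w) T}" for T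
  have "limsup (\<lambda>T. eln (m T) / ereal (a T)) \<le> -1"
    using guarantee x P unfolding out_of_sample_guarantee_def m_def by blast
  also have "-1 < ereal (- (1 + K) / 2)"
  proof -
    show ?thesis using K by (simp add: one_ereal_def)
  qed
  finally have ev1: "eventually (\<lambda>T. eln (m T) / ereal (a T) < ereal (- (1 + K) / 2)) sequentially"
    by (rule Limsup_lessD)
  have ev2: "eventually (\<lambda>T. a T \<ge> 2 * ln 2 / (1 - K)) sequentially"
    using a_inf by (simp add: filterlim_at_top)
  have "frequently (\<lambda>T. (T \<ge> 1 \<and> m T \<ge> exp (- a T * K) / 2) \<and>
           (eln (m T) / ereal (a T) < ereal (- (1 + K) / 2) \<and> a T \<ge> 2 * ln 2 / (1 - K))) sequentially"
  proof -
    have fr': "frequently (\<lambda>T. T \<ge> 1 \<and> m T \<ge> exp (- a T * K) / 2) sequentially"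
      using fr unfolding m_def .
    show ?thesis by (rule frequently_eventually_frequently[OF fr' eventually_conj[OF ev1 ev2]])
  qed
  then obtain T where T: "T \<ge> 1" "m T \<ge> exp (- a T * K) / 2"
      "eln (m T) / ereal (a T) < ereal (- (1 + K) / 2)" "a T \<ge> 2 * ln 2 / (1 - K)"
    by (auto dest: frequently_ex)
  have aT: "a T > 0" using a_pos T(1) by simp
  have mpos: "m T > 0" using T(2) exp_gt_zero[of "- a T * K"] by linarith
  have "ln (m T) \<ge> ln (exp (- a T * K) / 2)" using T(2) mpos by (subst ln_le_cancel_iff) auto
  also have "ln (exp (- a T * K) / 2) = - a T * K - ln 2" by (simp add: ln_div)
  finally have 1: "ln (m T) \<ge> - a T * K - ln 2" .
  have "2 * ln 2 \<le> a T * (1 - K)" using T(4) K by (simp add: pos_divide_le_eq)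
  moreover have "a T * (- (1 + K) / 2) = - a T * K - a T * (1 - K) / 2" by (simp add: field_simps)
  ultimately have "ln (m T) \<ge> a T * (- (1 + K) / 2)" using 1 by linarith
  then have "ln (m T) / a T \<ge> - (1 + K) / 2" using aT by (simp add: pos_le_divide_eq mult.commute)
  moreover have eq: "eln (m T) / ereal (a T) = ereal (ln (m T) / a T)"
    using mpos aT by (simp add: eln_def)
  have "ln (m T) / a T < - (1 + K) / 2" using T(3) unfolding eq by (simp only: less_ereal.simps(1))
  ultimately show False by linarith
qed

lemma dist_pair_same: "dist (x, Q) (x, P) = dist Q P"
  by (simp add: dist_Pair_Pair)

lemma consistency:
  assumes x: "x \<in> X" and P: "P \<in> prob_simplex_interior" and \<gamma>: "\<gamma> > 0"
  shows "eventually (\<lambda>T. chat x P T \<ge> cost l x P - \<gamma>) sequentially"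
proof (rule ccontr)
  assume "\<not> ?thesis"
  then have fr: "frequently (\<lambda>T. chat x P T < cost l x P - \<gamma>) sequentially"
    by (simp add: not_eventually not_le)
  have Ps: "P \<in> prob_simplex" using P by (auto simp: prob_simplex_def prob_simplex_interior_def less_imp_le)
  obtain \<delta> where \<delta>: "\<delta> > 0" and hd: "\<And>T Q. T \<ge> 1 \<Longrightarrow> Q \<in> prob_simplex \<Longrightarrow> dist Q P < \<delta> \<Longrightarrow>
         dist (chat x P T) (chat x Q T) < \<gamma>"
  proof -
    have xP: "(x, P) \<in> X \<times> prob_simplex" using x Ps by simp
    have "\<exists>\<delta>>0. \<forall>T\<ge>1. \<forall>z\<in>X \<times> prob_simplex. dist z (x, P) < \<delta> \<longrightarrow>
        dist ((\<lambda>T (x, P). chat x P T) T (x, P)) ((\<lambda>T (x, P). chat x P T) T z) < \<gamma>"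
      using chat_eqc xP \<gamma> unfolding equicont_on_def by blast
    then obtain \<delta> where d0: "\<delta> > 0" and h: "\<And>T z. T \<ge> 1 \<Longrightarrow> z \<in> X \<times> prob_simplex \<Longrightarrow> dist z (x, P) < \<delta> \<Longrightarrow>
        dist ((\<lambda>T (x, P). chat x P T) T (x, P)) ((\<lambda>T (x, P). chat x P T) T z) < \<gamma>" by blast
    have "dist (chat x P T) (chat x Q T) < \<gamma>" if "T \<ge> 1" "Q \<in> prob_simplex" "dist Q P < \<delta>" for T Q
      using h[of T "(x, Q)"] that x by (simp add: dist_pair_same)
    then show ?thesis using that d0 by blast
  qed
  define dC where "dC = real CARD('d)"
  have dC: "dC > 0" by (simp add: dC_def)
  define \<rho> where "\<rho> = \<delta> / (2 * dC)"
  have \<rho>: "\<rho> > 0" using \<delta> dC by (simp add: \<rho>_def)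
  have ev: "eventually (\<lambda>T. T \<ge> max 1 (nat \<lceil>4 * dC / \<rho>\<^sup>2\<rceil>)) sequentially"
    by (rule eventually_ge_at_top)
  have "frequently (\<lambda>T. T \<ge> 1 \<and> measure (law_inf P) {w \<in> space (law_inf P). cost l x P > chat x (empirical T w) T}
                  \<ge> exp (- a T * 0) / 2) sequentially"
  proof (rule frequently_mp[OF _ frequently_eventually_frequently[OF fr ev]], rule always_eventually, intro allI impI)
    fix T assume TT: "chat x P T < cost l x P - \<gamma> \<and> T \<ge> max 1 (nat \<lceil>4 * dC / \<rho>\<^sup>2\<rceil>)"
    then have T1: "T \<ge> 1" and T2: "real T \<ge> 4 * dC / \<rho>\<^sup>2" by auto
    have Tpos: "real T > 0" using T1 by simp
    have Ppos: "\<And>j. P$j > 0" and sP: "(\<Sum>j\<in>UNIV. P$j) = 1" using P by (auto simp: prob_simplex_interior_def)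
    have "measure (law_inf P) {w \<in> space (law_inf P). cost l x P > chat x (empirical T w) T}
        = W P T (\<lambda>u. if cost l x P > chat x (emp T u) T then 1 else 0)"
      by (rule measure_emp[OF Ps])
    also have "\<dots> \<ge> W P T (\<lambda>u. if (\<forall>j. \<bar>real (cnt j u) / real T - P$j\<bar> < \<rho>) then 1 else 0)"
    proof (rule W_mono_len)
      show "\<And>i. P$i \<ge> 0" using Ppos less_imp_le by blast
      fix u :: "'d list" assume len: "length u = T"
      show "(if (\<forall>j. \<bar>real (cnt j u) / real T - P$j\<bar> < \<rho>) then 1 else 0)
           \<le> (if cost l x P > chat x (emp T u) T then 1 else (0::real))"
      proof (cases "\<forall>j. \<bar>real (cnt j u) / real T - P$j\<bar> < \<rho>")
        case True
        have es: "emp T u \<in> prob_simplex" using emp_simplex[OF len T1] .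
        have "norm (emp T u - P) \<le> dC * \<rho>"
          unfolding dC_def by (rule norm_le_card) (use True in \<open>simp add: emp_def\<close>)
        also have "\<dots> < \<delta>" using \<delta> dC by (simp add: \<rho>_def)
        finally have "dist (emp T u) P < \<delta>" by (simp add: dist_norm)
        from hd[OF T1 es this] have "dist (chat x P T) (chat x (emp T u) T) < \<gamma>" by auto
        then have "chat x (emp T u) T < cost l x P" using TT by (simp add: dist_real_def abs_less_iff)
        then show ?thesis by simp
      qed auto
    qed
    also have "W P T (\<lambda>u. if (\<forall>j. \<bar>real (cnt j u) / real T - P$j\<bar> < \<rho>) then 1 else 0)
         \<ge> exp (- real T * (\<Sum>j\<in>UNIV. P$j * ln (P$j / P$j)) - real T * \<rho> * (\<Sum>j\<in>UNIV. \<bar>ln (P$j / P$j)\<bar>))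
            * (1 - real CARD('d) / (real T * \<rho>\<^sup>2))"
      by (rule W_lower[OF Ppos Ppos sP \<rho> T1])
    moreover have "exp (- real T * (\<Sum>j\<in>UNIV. P$j * ln (P$j / P$j)) - real T * \<rho> * (\<Sum>j\<in>UNIV. \<bar>ln (P$j / P$j)\<bar>))
            * (1 - real CARD('d) / (real T * \<rho>\<^sup>2)) \<ge> exp (- a T * 0) / 2"
    proof -
      have "\<And>j. P$j / P$j = 1" using Ppos by (simp add: less_imp_neq[symmetric])
      then have e: "exp (- real T * (\<Sum>j\<in>UNIV. P$j * ln (P$j / P$j)) - real T * \<rho> * (\<Sum>j\<in>UNIV. \<bar>ln (P$j / P$j)\<bar>)) = 1"
        by simp
      have "real T * \<rho>\<^sup>2 \<ge> 4 * dC" using T2 \<rho> by (simp add: field_simps)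
      then have "dC / (real T * \<rho>\<^sup>2) \<le> 1/2" using dC \<rho> Tpos by (simp add: field_simps)
      then show ?thesis unfolding e by (simp add: dC_def)
    qed
    ultimately show "T \<ge> 1 \<and> measure (law_inf P) {w \<in> space (law_inf P). cost l x P > chat x (empirical T w) T}
                  \<ge> exp (- a T * 0) / 2" using T1 by linarith
  qed
  then show False by (rule guar_contra[OF x P zero_less_one])
qed

lemma taylor:
  assumes x: "x \<in> X" and P: "P \<in> prob_simplex" and \<beta>: "\<beta> > 0"
  shows "\<exists>\<delta>>0. \<forall>T\<ge>1. \<forall>Q\<in>prob_simplex. norm (Q - P) < \<delta> \<longrightarrow>
           \<bar>chat x Q T - chat x P T - g x P T \<bullet> (Q - P)\<bar> \<le> \<beta> * norm (Q - P)"
proof -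
  obtain \<delta> where \<delta>: "\<delta> > 0" and hd: "\<And>T Q. T \<ge> 1 \<Longrightarrow> Q \<in> prob_simplex \<Longrightarrow> dist Q P < \<delta> \<Longrightarrow>
         dist (g x P T) (g x Q T) < \<beta>"
  proof -
    have xP: "(x, P) \<in> X \<times> prob_simplex" using x P by simp
    have "\<exists>\<delta>>0. \<forall>T\<ge>1. \<forall>z\<in>X \<times> prob_simplex. dist z (x, P) < \<delta> \<longrightarrow>
        dist ((\<lambda>T (x, P). g x P T) T (x, P)) ((\<lambda>T (x, P). g x P T) T z) < \<beta>"
      using g_eqc xP \<beta> unfolding equicont_on_def by blast
    then obtain \<delta> where d0: "\<delta> > 0" and h: "\<And>T z. T \<ge> 1 \<Longrightarrow> z \<in> X \<times> prob_simplex \<Longrightarrow> dist z (x, P) < \<delta> \<Longrightarrow>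
        dist ((\<lambda>T (x, P). g x P T) T (x, P)) ((\<lambda>T (x, P). g x P T) T z) < \<beta>" by blast
    have "dist (g x P T) (g x Q T) < \<beta>" if "T \<ge> 1" "Q \<in> prob_simplex" "dist Q P < \<delta>" for T Q
      using h[of T "(x, Q)"] that x by (simp add: dist_pair_same)
    then show ?thesis using that d0 by blast
  qed
  show ?thesis
  proof (intro exI[of _ \<delta>] conjI allI impI ballI \<delta>)
    fix T :: nat and Q assume T: "T \<ge> 1" and Q: "Q \<in> prob_simplex" and nQ: "norm (Q - P) < \<delta>"
    define S where "S = prob_simplex \<inter> ball P \<delta>"
    have "norm (chat x Q T - chat x P T - g x P T \<bullet> (Q - P)) \<le> norm (Q - P) * \<beta>"
    proof (rule differentiable_bound_linearization[where S=S and f'="\<lambda>y h. g x y T \<bullet> h"])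
      fix t :: real assume t: "t \<in> {0..1}"
      have "P + t *\<^sub>R (Q - P) \<in> prob_simplex" using simplex_convex[OF P Q] t by auto
      moreover have "dist P (P + t *\<^sub>R (Q - P)) < \<delta>"
      proof -
        have "dist P (P + t *\<^sub>R (Q - P)) = \<bar>t\<bar> * norm (Q - P)" by (simp add: dist_norm)
        also have "\<dots> \<le> norm (Q - P)" using t by (auto intro: mult_left_le_one_le)
        finally show ?thesis using nQ by linarith
      qed
      ultimately show "P + t *\<^sub>R (Q - P) \<in> S" by (simp add: S_def)
    next
      fix y assume y: "y \<in> S"
      then have ys: "y \<in> prob_simplex" by (simp add: S_def)
      show "((\<lambda>Q. chat x Q T) has_derivative (\<lambda>h. g x y T \<bullet> h)) (at y within S)"
        using g_der T x ys by (auto intro: has_derivative_subset simp: S_def)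
    next
      fix y assume y: "y \<in> S"
      then have ys: "y \<in> prob_simplex" and yd: "dist P y < \<delta>" by (auto simp: S_def)
      have "(\<lambda>h. g x y T \<bullet> h) - (\<lambda>h. g x P T \<bullet> h) = (\<lambda>h. (g x y T - g x P T) \<bullet> h)"
        by (simp add: fun_diff_def inner_diff_left)
      then have "onorm ((\<lambda>h. g x y T \<bullet> h) - (\<lambda>h. g x P T \<bullet> h)) \<le> norm (g x y T - g x P T) * onorm (\<lambda>h::real^'d. h)"
        using onorm_inner_right[OF bounded_linear_ident, of "g x y T - g x P T"] by simp
      also have "\<dots> = norm (g x y T - g x P T)" by (simp add: onorm_id)
      also have "\<dots> < \<beta>"
        using hd[OF T ys] yd by (simp add: dist_commute dist_norm norm_minus_commute)
      finally show "onorm ((\<lambda>h. g x y T \<bullet> h) - (\<lambda>h. g x P T \<bullet> h)) \<le> \<beta>" by simp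
    next
      show "P \<in> S" using P \<delta> by (simp add: S_def)
    qed
    then show "\<bar>chat x Q T - chat x P T - g x P T \<bullet> (Q - P)\<bar> \<le> \<beta> * norm (Q - P)"
      by (simp add: mult.commute)
  qed
qed

lemma g_bound: "\<exists>B. \<forall>x\<in>X. \<forall>P\<in>prob_simplex. \<forall>T\<ge>1. norm (g x P T) \<le> B"
  using g_bdd unfolding unif_bounded_on_def by fastforce

end


definition hvec :: "(real^'n \<Rightarrow> 'd::finite \<Rightarrow> real) \<Rightarrow> real^'n \<Rightarrow> real^'d \<Rightarrow> real^'d" where
  "hvec l x P = (\<chi> j. - (P$j * (l x j - cost l x P)))"

lemma sum_PD:
  assumes "(\<Sum>j\<in>UNIV. P$j) = 1"
  shows "(\<Sum>j\<in>UNIV. P$j * (l x j - cost l x P)) = 0"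
proof -
  have "(\<Sum>j\<in>UNIV. P$j * (l x j - cost l x P)) = (\<Sum>j\<in>UNIV. l x j * P$j) - cost l x P * (\<Sum>j\<in>UNIV. P$j)"
    by (simp add: right_diff_distrib sum_subtractf sum_distrib_left mult_ac)
  then show ?thesis using assms by (simp add: cost_def)
qed

lemma sum_hvec: "(\<Sum>j\<in>UNIV. P$j) = 1 \<Longrightarrow> (\<Sum>j\<in>UNIV. hvec l x P $ j) = 0"
  using sum_PD[of P l x] by (simp add: hvec_def sum_negf)

lemma sum_lPD:
  assumes "(\<Sum>j\<in>UNIV. P$j) = 1"
  shows "(\<Sum>j\<in>UNIV. l x j * (P$j * (l x j - cost l x P))) = variance_loss l x P"
proof -
  have "(\<Sum>j\<in>UNIV. l x j * (P$j * (l x j - cost l x P)))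
      = (\<Sum>j\<in>UNIV. P$j * (l x j - cost l x P)\<^sup>2) + cost l x P * (\<Sum>j\<in>UNIV. P$j * (l x j - cost l x P))"
    by (simp add: sum_distrib_left sum.distrib[symmetric] power2_eq_square algebra_simps)
  then show ?thesis using sum_PD[OF assms, of l x] by (simp add: variance_loss_def)
qed

lemma cost_shift:
  assumes "(\<Sum>j\<in>UNIV. P$j) = 1"
  shows "cost l x (P + t *\<^sub>R hvec l x P) = cost l x P - t * variance_loss l x P"
proof -
  have "cost l x (P + t *\<^sub>R hvec l x P) = cost l x P - t * (\<Sum>j\<in>UNIV. l x j * (P$j * (l x j - cost l x P)))"
    unfolding cost_def hvec_def
    by (simp add: algebra_simps sum.distrib sum_distrib_left sum_subtractf sum_negf)
  then show ?thesis using sum_lPD[OF assms, of l x] by simp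
qed

lemma var_nonneg: "(\<And>j. P$j \<ge> 0) \<Longrightarrow> variance_loss l x P \<ge> 0"
  unfolding variance_loss_def by (auto intro!: sum_nonneg)

lemma choose_tau:
  assumes V: "V \<ge> (0::real)" and s: "s < sqrt (2 * V)"
  shows "\<exists>\<tau>\<ge>0. s < \<tau> * V \<and> \<tau>\<^sup>2 * V < 2"
proof (cases "V = 0")
  case True then show ?thesis using s by (intro exI[of _ 0]) simp
next
  case False
  then have Vp: "V > 0" using V by simp
  define s' where "s' = (max s 0 + sqrt (2 * V)) / 2"
  have sq: "sqrt (2 * V) > 0" using Vp by simp
  have s1: "s' > max s 0" and s2: "s' < sqrt (2 * V)" using s sq by (auto simp: s'_def)
  have "s'\<^sup>2 < (sqrt (2 * V))\<^sup>2" using s1 s2 by (intro power_strict_mono) auto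
  then have "s'\<^sup>2 < 2 * V" using Vp by simp
  show ?thesis
  proof (intro exI[of _ "s' / V"] conjI)
    show "s' / V \<ge> 0" using s1 Vp by simp
    show "s < s' / V * V" using s1 Vp by simp
    have "(s' / V)\<^sup>2 * V = s'\<^sup>2 / V" using Vp by (simp add: power2_eq_square field_simps)
    also have "\<dots> < 2" using \<open>s'\<^sup>2 < 2 * V\<close> Vp by (simp add: field_simps)
    finally show "(s' / V)\<^sup>2 * V < 2" .
  qed
qed

context thm7 begin

lemma r_lim: "strict_mono \<sigma> \<Longrightarrow> (\<lambda>n. sqrt (a (\<sigma> n) / real (\<sigma> n))) \<longlonglongrightarrow> 0"
  using tendsto_real_sqrt[OF LIMSEQ_subseq_LIMSEQ[OF a_sublin]] by (simp add: o_def)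

lemma g_limit:
  assumes x: "x \<in> X" and P: "P \<in> prob_simplex_interior" and \<sigma>: "strict_mono \<sigma>"
    and bad: "\<And>n. \<sigma> n \<ge> 1 \<and> chat x P (\<sigma> n) - cost l x P \<le> s * sqrt (a (\<sigma> n) / real (\<sigma> n))"
    and G: "(\<lambda>n. g x P (\<sigma> n)) \<longlonglongrightarrow> G"
  shows "G \<bullet> hvec l x P \<le> - variance_loss l x P"
proof -
  define c0 where "c0 = cost l x P"
  define V where "V = variance_loss l x P"
  define h where "h = hvec l x P"
  define D where "D j = l x j - c0" for j
  define M1 where "M1 = (\<Sum>j\<in>UNIV. \<bar>D j\<bar>)"
  define nh where "nh = norm h"
  have Ppos: "\<And>j. P$j > 0" and sP: "(\<Sum>j\<in>UNIV. P$j) = 1" using P by (auto simp: prob_simplex_interior_def)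
  have Ps: "P \<in> prob_simplex" using P by (auto simp: prob_simplex_def prob_simplex_interior_def less_imp_le)
  have M1: "\<And>j. \<bar>D j\<bar> \<le> M1" unfolding M1_def by (rule member_le_sum) auto
  have M10: "M1 \<ge> 0" unfolding M1_def by (auto intro: sum_nonneg)
  have nh0: "nh \<ge> 0" by (simp add: nh_def)
  have "V \<le> - (G \<bullet> h) + e" if e: "e > 0" for e
  proof -
    define \<beta> where "\<beta> = e / (1 + nh)"
    have \<beta>: "\<beta> > 0" using e nh0 by (simp add: \<beta>_def)
    have \<beta>e: "\<beta> * (1 + nh) = e" using nh0 by (simp add: \<beta>_def)
    obtain \<delta> where \<delta>: "\<delta> > 0" and tay: "\<And>T Q. T \<ge> 1 \<Longrightarrow> Q \<in> prob_simplex \<Longrightarrow> norm (Q - P) < \<delta> \<Longrightarrow>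
           \<bar>chat x Q T - chat x P T - g x P T \<bullet> (Q - P)\<bar> \<le> \<beta> * norm (Q - P)"
      using taylor[OF x Ps \<beta>] by blast
    define \<epsilon> where "\<epsilon> = min (1 / (2 * (M1 + 1))) (\<delta> / (2 * (nh + 1)))"
    have \<epsilon>: "\<epsilon> > 0" using M10 nh0 \<delta> by (simp add: \<epsilon>_def)
    have \<epsilon>1: "\<epsilon> * M1 < 1"
    proof -
      have "\<epsilon> \<le> 1 / (2 * (M1 + 1))" by (simp add: \<epsilon>_def)
      then have "\<epsilon> * M1 \<le> 1 / (2 * (M1 + 1)) * M1" using mult_right_mono M10 by blast
      also have "\<dots> < 1" using M10 by (simp add: field_simps)
      finally show ?thesis .
    qed
    have \<epsilon>2: "\<epsilon> * nh < \<delta>"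
    proof -
      have "\<epsilon> * nh \<le> \<delta> / (2 * (nh + 1)) * nh" using nh0 by (intro mult_right_mono) (auto simp: \<epsilon>_def)
      also have "\<dots> < \<delta>"
      proof -
        have f: "nh / (2 * (nh + 1)) < 1" using nh0 by (simp add: field_simps)
        have "\<delta> * (nh / (2 * (nh + 1))) < \<delta> * 1" by (rule mult_strict_left_mono[OF f \<delta>])
        moreover have "\<delta> / (2 * (nh + 1)) * nh = \<delta> * (nh / (2 * (nh + 1)))" by simp
        ultimately show ?thesis by simp
      qed
      finally show ?thesis .
    qed
    define P' where "P' = P + (- \<epsilon>) *\<^sub>R h"
    have P'j: "P'$j = P$j * (1 + \<epsilon> * D j)" for j
      by (simp add: P'_def h_def hvec_def D_def c0_def algebra_simps)
    have P'pos: "P'$j > 0" for j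
    proof -
      have "\<epsilon> * \<bar>D j\<bar> \<le> \<epsilon> * M1" using M1[of j] \<epsilon> by (intro mult_left_mono) auto
      moreover have "\<bar>\<epsilon> * D j\<bar> = \<epsilon> * \<bar>D j\<bar>" using \<epsilon> by (simp add: abs_mult)
      ultimately have "\<bar>\<epsilon> * D j\<bar> < 1" using \<epsilon>1 by linarith
      then have "1 + \<epsilon> * D j > 0" by linarith
      then show ?thesis using Ppos[of j] P'j[of j] by simp
    qed
    have sP': "(\<Sum>j\<in>UNIV. P'$j) = 1"
      using sum_hvec[OF sP, of l x] sP by (simp add: P'_def h_def sum_subtractf sum_distrib_left[symmetric])
    have P'int: "P' \<in> prob_simplex_interior" using P'pos sP' by (simp add: prob_simplex_interior_def)
    have P's: "P' \<in> prob_simplex" using P'pos sP' by (auto simp: prob_simplex_def less_imp_le)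
    have nP': "norm (P' - P) = \<epsilon> * nh" using \<epsilon> by (simp add: P'_def nh_def)
    have costP': "cost l x P' = c0 + \<epsilon> * V"
      using cost_shift[OF sP, of l x "- \<epsilon>"] by (simp add: P'_def h_def c0_def V_def)
    have ev1: "eventually (\<lambda>T. chat x P' T \<ge> c0 + \<epsilon> * V - \<epsilon> * \<beta>) sequentially"
      using consistency[OF x P'int, of "\<epsilon> * \<beta>"] \<epsilon> \<beta> costP' by simp
    have ev1': "eventually (\<lambda>n. chat x P' (\<sigma> n) \<ge> c0 + \<epsilon> * V - \<epsilon> * \<beta>) sequentially"
      using filterlim_iff[THEN iffD1, OF filterlim_subseq[OF \<sigma>], rule_format, OF ev1] by simp
    have ineq: "\<epsilon> * V - \<epsilon> * \<beta> - \<beta> * (\<epsilon> * nh) \<le> s * sqrt (a (\<sigma> n) / real (\<sigma> n)) - \<epsilon> * (g x P (\<sigma> n) \<bullet> h)"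
      if hn: "chat x P' (\<sigma> n) \<ge> c0 + \<epsilon> * V - \<epsilon> * \<beta>" for n
    proof -
      have T1: "\<sigma> n \<ge> 1" using bad[of n] by simp
      have "chat x P' (\<sigma> n) \<le> chat x P (\<sigma> n) + g x P (\<sigma> n) \<bullet> (P' - P) + \<beta> * norm (P' - P)"
        using tay[OF T1 P's] nP' \<epsilon>2 by (simp add: abs_le_iff)
      moreover have "g x P (\<sigma> n) \<bullet> (P' - P) = - \<epsilon> * (g x P (\<sigma> n) \<bullet> h)"
        by (simp add: P'_def)
      moreover have "chat x P (\<sigma> n) \<le> c0 + s * sqrt (a (\<sigma> n) / real (\<sigma> n))"
        using bad[of n] by (simp add: c0_def)
      ultimately show ?thesis using hn nP' by simp
    qed
    have lim: "(\<lambda>n. s * sqrt (a (\<sigma> n) / real (\<sigma> n)) - \<epsilon> * (g x P (\<sigma> n) \<bullet> h)) \<longlonglongrightarrow> s * 0 - \<epsilon> * (G \<bullet> h)"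
      by (intro tendsto_intros r_lim[OF \<sigma>] G)
    have "\<epsilon> * V - \<epsilon> * \<beta> - \<beta> * (\<epsilon> * nh) \<le> s * 0 - \<epsilon> * (G \<bullet> h)"
      by (rule tendsto_lowerbound[OF lim]) (use ev1' ineq in \<open>auto elim: eventually_mono\<close>)
    then have "\<epsilon> * (V - \<beta> * (1 + nh)) \<le> \<epsilon> * (- (G \<bullet> h))" by (simp add: algebra_simps)
    then have "V - \<beta> * (1 + nh) \<le> - (G \<bullet> h)" using \<epsilon> by (rule mult_left_le_imp_le)
    then show ?thesis using \<beta>e by simp
  qed
  then have "V \<le> - (G \<bullet> h)" by (rule field_le_epsilon)
  then show ?thesis by (simp add: V_def h_def)
qed

end


lemma div_mul_cancel4: "(Z::real) \<noteq> 0 \<Longrightarrow> m / (4 * Z) * Z = m / 4"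
  by (simp add: field_simps)

lemma frac_le: fixes x c k :: real shows "0 \<le> x \<Longrightarrow> 0 \<le> c \<Longrightarrow> 0 < k \<Longrightarrow> c / (k * (x + 1)) * x \<le> c / k"
proof -
  assume h: "0 \<le> x" "0 \<le> c" "0 < k"
  have "c / (k * (x + 1)) * x = (c / k) * (x / (x + 1))" using h by (simp add: field_simps)
  also have "x / (x + 1) \<le> 1" using h by simp
  then have "(c / k) * (x / (x + 1)) \<le> (c / k) * 1" using h by (intro mult_left_mono) auto
  finally show ?thesis by simp
qed
lemma frac_less: fixes x c :: real shows "0 \<le> x \<Longrightarrow> 0 < c \<Longrightarrow> c / (x + 1) * x < c"
proof -
  assume h: "0 \<le> x" "0 < c"
  have "c / (x + 1) * x = c * (x / (x + 1))" by simp
  also have "x / (x + 1) < 1" using h by simp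
  then have "c * (x / (x + 1)) < c * 1" using h by (intro mult_strict_left_mono) auto
  finally show ?thesis by simp
qed

context thm7 begin

lemma main_contra:
  assumes x: "x \<in> X" and P: "P \<in> prob_simplex_interior"
    and s: "s < sqrt (2 * variance_loss l x P)"
    and fr: "frequently (\<lambda>T. T \<ge> 1 \<and> chat x P T - cost l x P \<le> s * sqrt (a T / real T)) sequentially"
  shows False
proof -
  define c0 where "c0 = cost l x P"
  define V where "V = variance_loss l x P"
  define h where "h = hvec l x P"
  define D where "D j = l x j - c0" for j
  define M1 where "M1 = (\<Sum>j\<in>UNIV. \<bar>D j\<bar>)"
  define M3 where "M3 = (\<Sum>j\<in>UNIV. P$j * \<bar>D j\<bar>^3)"
  define nh where "nh = norm h"
  define dC where "dC = real CARD('d)"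
  define bad where "bad T = (T \<ge> 1 \<and> chat x P T - c0 \<le> s * sqrt (a T / real T))" for T
  have Ppos: "\<And>j. P$j > 0" and sP: "(\<Sum>j\<in>UNIV. P$j) = 1" using P by (auto simp: prob_simplex_interior_def)
  have Ps: "P \<in> prob_simplex" using P by (auto simp: prob_simplex_def prob_simplex_interior_def less_imp_le)
  have M1: "\<And>j. \<bar>D j\<bar> \<le> M1" unfolding M1_def by (rule member_le_sum) auto
  have M10: "M1 \<ge> 0" unfolding M1_def by (auto intro: sum_nonneg)
  have M30: "M3 \<ge> 0" unfolding M3_def using Ppos by (intro sum_nonneg mult_nonneg_nonneg) (auto simp: less_imp_le)
  have nh0: "nh \<ge> 0" by (simp add: nh_def)
  have dC: "dC > 0" by (simp add: dC_def)
  have V0: "V \<ge> 0" unfolding V_def by (rule var_nonneg) (use Ppos in \<open>simp add: less_imp_le\<close>)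
  have VD: "V = (\<Sum>j\<in>UNIV. P$j * (D j)\<^sup>2)" by (simp add: V_def variance_loss_def D_def c0_def)
  have sPD: "(\<Sum>j\<in>UNIV. P$j * D j) = 0" using sum_PD[OF sP, of l x] by (simp add: D_def c0_def)
  have "infinite {T. bad T}"
    using fr unfolding infinite_nat_iff_unbounded_le frequently_sequentially bad_def c0_def by auto
  then obtain \<sigma>0 :: "nat \<Rightarrow> nat" where \<sigma>0: "strict_mono \<sigma>0" and bad0: "\<And>n. bad (\<sigma>0 n)"
    using infinite_enumerate by blast
  obtain B where B: "\<And>T. T \<ge> 1 \<Longrightarrow> norm (g x P T) \<le> B" using g_bound x Ps by blast
  have B0: "B \<ge> 0" using B[of 1] by (meson norm_ge_zero order_trans order.refl)
  have "bounded (range (\<lambda>n. g x P (\<sigma>0 n)))"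
    using B bad0 unfolding bad_def by (auto intro!: boundedI[of _ B])
  then obtain G \<rho>s where \<rho>s: "strict_mono \<rho>s" and G: "((\<lambda>n. g x P (\<sigma>0 n)) \<circ> \<rho>s) \<longlonglongrightarrow> G"
    using bounded_imp_convergent_subsequence by blast
  define \<sigma> where "\<sigma> = \<sigma>0 \<circ> \<rho>s"
  have \<sigma>: "strict_mono \<sigma>" unfolding \<sigma>_def using \<sigma>0 \<rho>s by (rule strict_mono_o)
  have bad\<sigma>: "\<And>n. bad (\<sigma> n)" using bad0 by (simp add: \<sigma>_def)
  have G\<sigma>: "(\<lambda>n. g x P (\<sigma> n)) \<longlonglongrightarrow> G" using G by (simp add: \<sigma>_def o_def)
  have Gh: "G \<bullet> h \<le> - V"
    using g_limit[OF x P \<sigma> _ G\<sigma>, of s] bad\<sigma> by (simp add: bad_def c0_def h_def V_def)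
  obtain \<tau> where \<tau>0: "\<tau> \<ge> 0" and \<tau>1: "s < \<tau> * V" and \<tau>2: "\<tau>\<^sup>2 * V < 2"
    using choose_tau[OF V0 s[folded V_def]] by blast
  define m where "m = \<tau> * V - s"
  have m: "m > 0" using \<tau>1 by (simp add: m_def)
  define K0 where "K0 = \<tau>\<^sup>2 * V / 2"
  have K0: "K0 < 1" using \<tau>2 by (simp add: K0_def)
  have K00: "K0 \<ge> 0" using V0 by (simp add: K0_def)
  define \<theta> where "\<theta> = m / 4"
  define \<eta> where "\<eta> = min (m / (4 * (B * dC + 1))) ((1 - K0) / (8 * (\<tau> * M1 + 1)))"
  have BdC: "B * dC \<ge> 0" using B0 dC by simp
  have tM1: "\<tau> * M1 \<ge> 0" using \<tau>0 M10 by simp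
  have \<eta>: "\<eta> > 0" using m K0 BdC tM1 by (simp add: \<eta>_def)
  have \<eta>1: "B * dC * \<eta> \<le> m / 4"
  proof -
    have "B * dC * \<eta> \<le> B * dC * (m / (4 * (B * dC + 1)))" using B0 dC by (intro mult_left_mono) (auto simp: \<eta>_def)
    also have "\<dots> \<le> m / 4" using frac_le[OF BdC less_imp_le[OF m], of 4] by (simp add: mult.commute)
    finally show ?thesis .
  qed
  have \<eta>2: "2 * \<eta> * \<tau> * M1 \<le> (1 - K0) / 4"
  proof -
    have "2 * \<tau> * M1 * \<eta> \<le> 2 * \<tau> * M1 * ((1 - K0) / (8 * (\<tau> * M1 + 1)))"
      using \<tau>0 M10 by (intro mult_left_mono) (auto simp: \<eta>_def)
    also have "\<dots> \<le> (1 - K0) / 4"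
    proof -
      have "(1 - K0) / (8 * (\<tau> * M1 + 1)) * (\<tau> * M1) \<le> (1 - K0) / 8" using K0 by (intro frac_le tM1) auto
      then show ?thesis by (simp add: mult_ac)
    qed
    finally show ?thesis by (simp add: mult_ac)
  qed
  define \<beta> where "\<beta> = m / (4 * (dC * \<eta> + \<tau> * nh + 1))"
  have dCeta: "dC * \<eta> > 0" using dC \<eta> by simp
  have tnh: "\<tau> * nh \<ge> 0" using \<tau>0 nh0 by simp
  have \<beta>: "\<beta> > 0" using m dCeta tnh by (simp add: \<beta>_def)
  have \<beta>1: "\<beta> * (dC * \<eta> + \<tau> * nh) \<le> m / 4"
  proof -
    have "\<beta> * (dC * \<eta> + \<tau> * nh) \<le> \<beta> * (dC * \<eta> + \<tau> * nh + 1)" using \<beta> by simp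
    also have "\<dots> = m / 4" unfolding \<beta>_def by (rule div_mul_cancel4) (use dCeta tnh in linarith)
    finally show ?thesis .
  qed
  obtain \<delta> where \<delta>: "\<delta> > 0" and tay: "\<And>T Q. T \<ge> 1 \<Longrightarrow> Q \<in> prob_simplex \<Longrightarrow> norm (Q - P) < \<delta> \<Longrightarrow>
         \<bar>chat x Q T - chat x P T - g x P T \<bullet> (Q - P)\<bar> \<le> \<beta> * norm (Q - P)"
    using taylor[OF x Ps \<beta>] by blast
  define K where "K = K0 + (1 - K0) / 2"
  have K: "K < 1" using K0 by (simp add: K_def field_simps)
  have eqK: "K = K0 + (1 - K0) / 4 + (1 - K0) / 4" by (simp add: K_def field_simps)
  define r where "r n = sqrt (a (\<sigma> n) / real (\<sigma> n))" for n
  have rlim: "r \<longlonglongrightarrow> 0" unfolding r_def by (rule r_lim[OF \<sigma>])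
  have e1: "eventually (\<lambda>n. \<tau> * (g x P (\<sigma> n) \<bullet> h) \<le> \<tau> * (G \<bullet> h) + \<theta>) sequentially"
  proof -
    have "(\<lambda>n. \<tau> * (g x P (\<sigma> n) \<bullet> h)) \<longlonglongrightarrow> \<tau> * (G \<bullet> h)" by (intro tendsto_intros G\<sigma>)
    moreover have "\<theta> > 0" using m by (simp add: \<theta>_def)
    ultimately have "eventually (\<lambda>n. dist (\<tau> * (g x P (\<sigma> n) \<bullet> h)) (\<tau> * (G \<bullet> h)) < \<theta>) sequentially"
      by (rule tendstoD)
    then show ?thesis by eventually_elim (simp add: dist_real_def abs_less_iff)
  qed
  define rb where "rb = min (1 / (2 * (\<tau> * M1 + 1))) (min ((1 - K0) / (8 * (\<tau>^3 * M3 + 1))) (\<delta> / (dC * \<eta> + \<tau> * nh + 1)))"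
  have tM3: "\<tau>^3 * M3 \<ge> 0" using \<tau>0 M30 by simp
  have rb: "rb > 0" using tM1 tM3 K0 \<delta> dCeta tnh by (simp add: rb_def)
  have e2: "eventually (\<lambda>n. r n < rb) sequentially"
    using tendstoD[OF rlim rb] by eventually_elim (simp add: r_def)
  have e3: "eventually (\<lambda>n. a (\<sigma> n) \<ge> 2 * dC / \<eta>\<^sup>2) sequentially"
  proof -
    have "filterlim (\<lambda>n. a (\<sigma> n)) at_top sequentially"
      using filterlim_compose[OF a_inf filterlim_subseq[OF \<sigma>]] .
    then show ?thesis by (simp add: filterlim_at_top)
  qed
  have key: "exp (- a (\<sigma> n) * K) / 2 \<le> measure (law_inf P) {w \<in> space (law_inf P). c0 > chat x (empirical (\<sigma> n) w) (\<sigma> n)}"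
    if H1: "\<tau> * (g x P (\<sigma> n) \<bullet> h) \<le> \<tau> * (G \<bullet> h) + \<theta>" and H2: "r n < rb" and H3: "a (\<sigma> n) \<ge> 2 * dC / \<eta>\<^sup>2" for n
  proof -
    define T where "T = \<sigma> n"
    define rr where "rr = r n"
    have T1: "T \<ge> 1" and badT: "chat x P T - c0 \<le> s * rr"
      using bad\<sigma>[of n] by (auto simp: bad_def T_def rr_def r_def)
    have Tpos: "real T > 0" using T1 by simp
    have aT: "a T > 0" using a_pos[OF T1] .
    have rr0: "rr > 0" using aT Tpos by (simp add: rr_def r_def T_def)
    have Trr: "real T * rr\<^sup>2 = a T" using aT Tpos by (simp add: rr_def r_def T_def)
    have r1: "rr * (\<tau> * M1) \<le> 1/2"
    proof -
      have "rr * (\<tau> * M1) \<le> rb * (\<tau> * M1)" using H2 \<tau>0 M10 by (intro mult_right_mono) (auto simp: rr_def)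
      also have "\<dots> \<le> 1 / (2 * (\<tau> * M1 + 1)) * (\<tau> * M1)" using \<tau>0 M10 by (intro mult_right_mono) (auto simp: rb_def)
      also have "\<dots> \<le> 1/2" using frac_le[OF tM1, of 1 2] by simp
      finally show ?thesis .
    qed
    have r2: "2 * rr * \<tau>^3 * M3 \<le> (1 - K0) / 4"
    proof -
      have "rr * (\<tau>^3 * M3) \<le> rb * (\<tau>^3 * M3)" using H2 \<tau>0 M30 by (intro mult_right_mono) (auto simp: rr_def)
      also have "\<dots> \<le> (1 - K0) / (8 * (\<tau>^3 * M3 + 1)) * (\<tau>^3 * M3)" using \<tau>0 M30 by (intro mult_right_mono) (auto simp: rb_def)
      also have "\<dots> \<le> (1 - K0) / 8" using K0 by (intro frac_le tM3) auto
      finally show ?thesis by (simp add: mult_ac)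
    qed
    have r3: "rr * (dC * \<eta> + \<tau> * nh) < \<delta>"
    proof -
      have "rr * (dC * \<eta> + \<tau> * nh) \<le> rb * (dC * \<eta> + \<tau> * nh)" using H2 \<tau>0 nh0 dC \<eta> by (intro mult_right_mono) (auto simp: rr_def)
      also have "\<dots> \<le> \<delta> / (dC * \<eta> + \<tau> * nh + 1) * (dC * \<eta> + \<tau> * nh)" using \<tau>0 nh0 dC \<eta> by (intro mult_right_mono) (auto simp: rb_def)
      also have "\<dots> < \<delta>" using dCeta tnh \<delta> by (intro frac_less) auto
      finally show ?thesis .
    qed
    define Q where "Q = P + (rr * \<tau>) *\<^sub>R h"
    define dl where "dl j = - (rr * \<tau> * D j)" for j
    have Qj: "Q$j = P$j * (1 + dl j)" for j
      by (simp add: Q_def h_def hvec_def dl_def D_def c0_def algebra_simps)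
    have dl: "\<bar>dl j\<bar> \<le> 1/2" for j
    proof -
      have "\<bar>dl j\<bar> = rr * \<tau> * \<bar>D j\<bar>" using rr0 \<tau>0 by (simp add: dl_def abs_mult)
      also have "\<dots> \<le> rr * \<tau> * M1" using rr0 \<tau>0 M1[of j] by (intro mult_left_mono) auto
      finally show ?thesis using r1 by (simp add: mult_ac)
    qed
    have Qpos: "Q$j > 0" for j
    proof -
      have "1 + dl j > 0" using dl[of j] by linarith
      then show ?thesis using Qj[of j] Ppos[of j] by simp
    qed
    have sQ: "(\<Sum>j\<in>UNIV. Q$j) = 1"
      using sum_hvec[OF sP, of l x] sP by (simp add: Q_def h_def sum.distrib sum_distrib_left[symmetric])
    have QP: "Q$j / P$j = 1 + dl j" for j using Qj[of j] Ppos[of j] by simp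
    define \<rho> where "\<rho> = \<eta> * rr"
    have \<rho>: "\<rho> > 0" using \<eta> rr0 by (simp add: \<rho>_def)
    have KL: "(\<Sum>j\<in>UNIV. Q$j * ln (Q$j / P$j)) \<le> rr\<^sup>2 * K0 + 2 * rr^3 * \<tau>^3 * M3"
    proof -
      have "(\<Sum>j\<in>UNIV. Q$j * ln (Q$j / P$j)) = (\<Sum>j\<in>UNIV. P$j * ((1 + dl j) * ln (1 + dl j)))"
        by (intro sum.cong refl) (simp add: QP Qj)
      also have "\<dots> \<le> (\<Sum>j\<in>UNIV. P$j * (dl j + (dl j)\<^sup>2 / 2 + 2 * \<bar>dl j\<bar>^3))"
        using Ppos by (intro sum_mono mult_left_mono xlnx_bound dl) (auto intro: less_imp_le)
      also have "\<dots> = (\<Sum>j\<in>UNIV. (- (rr * \<tau>)) * (P$j * D j) + ((rr * \<tau>)\<^sup>2 / 2) * (P$j * (D j)\<^sup>2)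
                     + (2 * (rr * \<tau>)^3) * (P$j * \<bar>D j\<bar>^3))"
      proof (intro sum.cong refl)
        fix j
        have a1: "\<bar>dl j\<bar> = (rr * \<tau>) * \<bar>D j\<bar>" using rr0 \<tau>0 by (simp add: dl_def abs_mult)
        have a2: "(dl j)\<^sup>2 = (rr * \<tau>)\<^sup>2 * (D j)\<^sup>2" by (simp add: dl_def power_mult_distrib)
        show "P$j * (dl j + (dl j)\<^sup>2 / 2 + 2 * \<bar>dl j\<bar>^3) = (- (rr * \<tau>)) * (P$j * D j) + ((rr * \<tau>)\<^sup>2 / 2) * (P$j * (D j)\<^sup>2)
                     + (2 * (rr * \<tau>)^3) * (P$j * \<bar>D j\<bar>^3)"
          unfolding a1 a2 by (simp add: dl_def power_mult_distrib algebra_simps)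
      qed
      also have "\<dots> = (- (rr * \<tau>)) * (\<Sum>j\<in>UNIV. P$j * D j) + ((rr * \<tau>)\<^sup>2 / 2) * (\<Sum>j\<in>UNIV. P$j * (D j)\<^sup>2)
                     + (2 * (rr * \<tau>)^3) * (\<Sum>j\<in>UNIV. P$j * \<bar>D j\<bar>^3)"
        by (simp only: sum.distrib sum_distrib_left)
      also have "\<dots> = (rr * \<tau>)\<^sup>2 / 2 * V + 2 * (rr * \<tau>)^3 * M3"
        by (simp add: sPD VD M3_def)
      also have "\<dots> = rr\<^sup>2 * K0 + 2 * rr^3 * \<tau>^3 * M3"
        by (simp add: K0_def power_mult_distrib field_simps)
      finally show ?thesis .
    qed
    have LB: "(\<Sum>j\<in>UNIV. \<bar>ln (Q$j / P$j)\<bar>) \<le> 2 * rr * \<tau> * M1"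
    proof -
      have "(\<Sum>j\<in>UNIV. \<bar>ln (Q$j / P$j)\<bar>) \<le> (\<Sum>j\<in>UNIV. 2 * \<bar>dl j\<bar>)"
        by (intro sum_mono) (simp add: QP abs_ln_bound[OF dl])
      also have "\<dots> = 2 * rr * \<tau> * M1"
        using rr0 \<tau>0 by (simp add: dl_def abs_mult M1_def sum_distrib_left mult_ac)
      finally show ?thesis .
    qed
    have expo: "real T * (\<Sum>j\<in>UNIV. Q$j * ln (Q$j / P$j)) + real T * \<rho> * (\<Sum>j\<in>UNIV. \<bar>ln (Q$j / P$j)\<bar>)
                \<le> a T * K"
    proof -
      have "real T * (\<Sum>j\<in>UNIV. Q$j * ln (Q$j / P$j)) \<le> real T * (rr\<^sup>2 * K0 + 2 * rr^3 * \<tau>^3 * M3)"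
        using KL Tpos by simp
      moreover have "real T * \<rho> * (\<Sum>j\<in>UNIV. \<bar>ln (Q$j / P$j)\<bar>) \<le> real T * \<rho> * (2 * rr * \<tau> * M1)"
        using LB Tpos \<rho> by simp
      moreover have "real T * (rr\<^sup>2 * K0 + 2 * rr^3 * \<tau>^3 * M3) + real T * \<rho> * (2 * rr * \<tau> * M1)
           = a T * (K0 + 2 * rr * \<tau>^3 * M3 + 2 * \<eta> * \<tau> * M1)"
        using Trr[symmetric] by (simp add: \<rho>_def power2_eq_square power3_eq_cube algebra_simps)
      moreover have "a T * (K0 + 2 * rr * \<tau>^3 * M3 + 2 * \<eta> * \<tau> * M1) \<le> a T * K"
      proof (rule mult_left_mono)
        show "K0 + 2 * rr * \<tau>^3 * M3 + 2 * \<eta> * \<tau> * M1 \<le> K" using r2 \<eta>2 eqK by linarith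
      qed (use aT in simp)
      ultimately show ?thesis by linarith
    qed
    have cheb: "1 - real CARD('d) / (real T * \<rho>\<^sup>2) \<ge> 1/2"
    proof -
      have "real T * \<rho>\<^sup>2 = \<eta>\<^sup>2 * a T" using Trr by (simp add: \<rho>_def power_mult_distrib mult_ac)
      also have "\<dots> \<ge> \<eta>\<^sup>2 * (2 * dC / \<eta>\<^sup>2)" using H3 \<eta> by (intro mult_left_mono) (auto simp: T_def)
      also have "\<eta>\<^sup>2 * (2 * dC / \<eta>\<^sup>2) = 2 * dC" using \<eta> by simp
      finally have "real T * \<rho>\<^sup>2 \<ge> 2 * dC" .
      moreover have "real T * \<rho>\<^sup>2 > 0" using Tpos \<rho> by simp
      ultimately show ?thesis using dC by (simp add: dC_def field_simps)
    qed
    have Wl: "W P T (\<lambda>u. if (\<forall>j. \<bar>real (cnt j u) / real T - Q$j\<bar> < \<rho>) then 1 else 0)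
          \<ge> exp (- a T * K) / 2"
    proof -
      have "exp (- a T * K) / 2 \<le> exp (- real T * (\<Sum>j\<in>UNIV. Q$j * ln (Q$j / P$j)) - real T * \<rho> * (\<Sum>j\<in>UNIV. \<bar>ln (Q$j / P$j)\<bar>))
           * (1 - real CARD('d) / (real T * \<rho>\<^sup>2))"
      proof -
        have "exp (- a T * K) \<le> exp (- real T * (\<Sum>j\<in>UNIV. Q$j * ln (Q$j / P$j)) - real T * \<rho> * (\<Sum>j\<in>UNIV. \<bar>ln (Q$j / P$j)\<bar>))"
          using expo by simp
        then have "exp (- a T * K) / 2 \<le> exp (- real T * (\<Sum>j\<in>UNIV. Q$j * ln (Q$j / P$j)) - real T * \<rho> * (\<Sum>j\<in>UNIV. \<bar>ln (Q$j / P$j)\<bar>)) * (1/2)"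
          by simp
        also have "\<dots> \<le> exp (- real T * (\<Sum>j\<in>UNIV. Q$j * ln (Q$j / P$j)) - real T * \<rho> * (\<Sum>j\<in>UNIV. \<bar>ln (Q$j / P$j)\<bar>))
           * (1 - real CARD('d) / (real T * \<rho>\<^sup>2))"
          using cheb by (intro mult_left_mono) auto
        finally show ?thesis .
      qed
      also have "\<dots> \<le> W P T (\<lambda>u. if (\<forall>j. \<bar>real (cnt j u) / real T - Q$j\<bar> < \<rho>) then 1 else 0)"
        by (rule W_lower[OF Ppos Qpos sQ \<rho> T1])
      finally show ?thesis .
    qed
    have "W P T (\<lambda>u. if (\<forall>j. \<bar>real (cnt j u) / real T - Q$j\<bar> < \<rho>) then 1 else 0)
        \<le> W P T (\<lambda>u. if c0 > chat x (emp T u) T then 1 else 0)"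
    proof (rule W_mono_len)
      show "\<And>i. P$i \<ge> 0" using Ppos less_imp_le by blast
      fix u :: "'d list" assume len: "length u = T"
      show "(if (\<forall>j. \<bar>real (cnt j u) / real T - Q$j\<bar> < \<rho>) then 1 else 0)
           \<le> (if c0 > chat x (emp T u) T then 1 else (0::real))"
      proof (cases "\<forall>j. \<bar>real (cnt j u) / real T - Q$j\<bar> < \<rho>")
        case True
        define Qh where "Qh = emp T u"
        have es: "Qh \<in> prob_simplex" unfolding Qh_def using emp_simplex[OF len T1] .
        have n1: "norm (Qh - Q) \<le> dC * \<rho>"
          unfolding dC_def by (rule norm_le_card) (use True in \<open>simp add: emp_def Qh_def\<close>)
        have n2: "norm (Q - P) = rr * \<tau> * nh" using rr0 \<tau>0 by (simp add: Q_def nh_def)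
        have "norm (Qh - P) \<le> norm (Qh - Q) + norm (Q - P)"
          using norm_triangle_ineq[of "Qh - Q" "Q - P"] by simp
        also have "\<dots> \<le> rr * (dC * \<eta> + \<tau> * nh)" using n1 n2 by (simp add: \<rho>_def algebra_simps)
        finally have nQh: "norm (Qh - P) \<le> rr * (dC * \<eta> + \<tau> * nh)" .
        then have "norm (Qh - P) < \<delta>" using r3 by linarith
        from tay[OF T1 es this]
        have t1: "chat x Qh T \<le> chat x P T + g x P T \<bullet> (Qh - P) + \<beta> * norm (Qh - P)" by (simp add: abs_le_iff)
        have "g x P T \<bullet> (Qh - P) = g x P T \<bullet> (Q - P) + g x P T \<bullet> (Qh - Q)" by (simp add: inner_diff_right)
        also have "g x P T \<bullet> (Q - P) = rr * (\<tau> * (g x P T \<bullet> h))" by (simp add: Q_def)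
        also have "g x P T \<bullet> (Qh - Q) \<le> B * (dC * \<rho>)"
        proof -
          have "g x P T \<bullet> (Qh - Q) \<le> norm (g x P T) * norm (Qh - Q)" by (rule norm_cauchy_schwarz)
          also have "\<dots> \<le> B * (dC * \<rho>)" using B[OF T1] n1 B0 by (intro mult_mono) auto
          finally show ?thesis .
        qed
        finally have t2: "g x P T \<bullet> (Qh - P) \<le> rr * (\<tau> * (g x P T \<bullet> h)) + B * (dC * \<rho>)" by simp
        have t3: "\<tau> * (g x P T \<bullet> h) \<le> - \<tau> * V + \<theta>"
        proof -
          have "\<tau> * (G \<bullet> h) \<le> \<tau> * (- V)" using Gh \<tau>0 by (intro mult_left_mono) auto
          then show ?thesis using H1 by (simp add: T_def)
        qed
        have t4: "\<beta> * norm (Qh - P) \<le> rr * (m / 4)"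
        proof -
          have "\<beta> * norm (Qh - P) \<le> \<beta> * (rr * (dC * \<eta> + \<tau> * nh))" using nQh \<beta> by (intro mult_left_mono) auto
          also have "\<dots> = rr * (\<beta> * (dC * \<eta> + \<tau> * nh))" by simp
          also have "\<dots> \<le> rr * (m / 4)" using \<beta>1 rr0 by (intro mult_left_mono) auto
          finally show ?thesis .
        qed
        have t5: "B * (dC * \<rho>) \<le> rr * (m / 4)"
        proof -
          have "B * (dC * \<rho>) = rr * (B * dC * \<eta>)" by (simp add: \<rho>_def mult_ac)
          also have "\<dots> \<le> rr * (m / 4)" using \<eta>1 rr0 by (intro mult_left_mono) auto
          finally show ?thesis .
        qed
        have t6: "rr * (\<tau> * (g x P T \<bullet> h)) \<le> rr * (- \<tau> * V + \<theta>)" using t3 rr0 by (intro mult_left_mono) auto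
        have "chat x Qh T - c0 \<le> rr * s + rr * (- \<tau> * V + \<theta>) + rr * (m / 4) + rr * (m / 4)"
          using t1 t2 t4 t5 t6 badT by (simp add: mult.commute)
        also have "\<dots> = rr * (s - \<tau> * V + \<theta> + m / 2)" by (simp add: algebra_simps)
        also have "s - \<tau> * V + \<theta> + m / 2 = - m / 4" unfolding m_def \<theta>_def by (simp add: field_simps)
        finally have "chat x Qh T - c0 \<le> rr * (- m / 4)" .
        moreover have "rr * (- m / 4) < 0" using rr0 m by (simp add: mult_pos_neg)
        ultimately have "chat x Qh T < c0" by linarith
        then show ?thesis using True by (simp add: Qh_def)
      qed auto
    qed
    also have "W P T (\<lambda>u. if c0 > chat x (emp T u) T then 1 else 0)
       = measure (law_inf P) {w \<in> space (law_inf P). c0 > chat x (empirical T w) T}"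
      by (rule measure_emp[OF Ps, symmetric])
    finally show ?thesis using Wl by (simp add: T_def)
  qed
  have "eventually (\<lambda>n. (\<lambda>T. T \<ge> 1 \<and> measure (law_inf P) {w \<in> space (law_inf P). cost l x P > chat x (empirical T w) T}
                  \<ge> exp (- a T * K) / 2) (\<sigma> n)) sequentially"
    using e1 e2 e3
  proof eventually_elim
    case (elim n)
    then show ?case using key[OF elim] bad\<sigma>[of n] by (simp add: c0_def bad_def)
  qed
  then have "frequently (\<lambda>T. T \<ge> 1 \<and> measure (law_inf P) {w \<in> space (law_inf P). cost l x P > chat x (empirical T w) T}
                  \<ge> exp (- a T * K) / 2) sequentially"
    by (rule frequently_subseq[OF \<sigma>])
  then show False by (rule guar_contra[OF x P K])
qed

end


theorem mainTheorem7:
  fixes X :: "(real^'n) set"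
    and l :: "real^'n \<Rightarrow> 'd::finite \<Rightarrow> real"
    and chat :: "real^'n \<Rightarrow> real^'d \<Rightarrow> nat \<Rightarrow> real"
    and a :: "nat \<Rightarrow> real"
  assumes d2: "CARD('d) \<ge> 2"
    and X_compact: "compact X"
    and l_cont: "\<And>i. continuous_on X (\<lambda>x. l x i)"
    and a_pos: "\<And>T. T \<ge> 1 \<Longrightarrow> a T > 0"
    and a_inf: "filterlim a at_top sequentially"
    and a_sublin: "(\<lambda>T. a T / real T) \<longlonglongrightarrow> 0"
    and regular: "regular_predictor X chat"
    and guarantee: "out_of_sample_guarantee X l chat a"
  shows "\<forall>x\<in>X. \<forall>P\<in>prob_simplex_interior.
           limsup (\<lambda>T. ereal (sqrt (real T / a T) * \<bar>chat_V l a x P T - cost l x P\<bar>))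
             \<le> liminf (\<lambda>T. ereal (sqrt (real T / a T) * (chat x P T - cost l x P))) \<and>
           limsup (\<lambda>T. ereal (sqrt (real T / a T) * \<bar>chat_V l a x P T - cost l x P\<bar>))
             = ereal (sqrt (2 * variance_loss l x P))"
proof -
  obtain g where g_der: "\<forall>T\<ge>1. \<forall>x\<in>X. \<forall>P\<in>prob_simplex.
            ((\<lambda>Q. chat x Q T) has_derivative (\<lambda>h. g x P T \<bullet> h)) (at P within prob_simplex)"
    and g_bdd: "unif_bounded_on (X \<times> prob_simplex) (\<lambda>T (x,P). g x P T)"
    and g_eqc: "equicont_on (X \<times> prob_simplex) (\<lambda>T (x,P). g x P T)"
    and chat_eqc: "equicont_on (X \<times> prob_simplex) (\<lambda>T (x,P). chat x P T)"
    using regular unfolding regular_predictor_def by blast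
  interpret thm7 X l chat a g
    by unfold_locales (use a_pos a_inf a_sublin chat_eqc g_der g_bdd g_eqc guarantee in auto)
  show ?thesis
  proof (intro ballI)
    fix x and P :: "real^'d" assume x: "x \<in> X" and P: "P \<in> prob_simplex_interior"
    define V where "V = variance_loss l x P"
    define c0 where "c0 = cost l x P"
    have V0: "V \<ge> 0" unfolding V_def using P
      by (intro var_nonneg) (auto simp: prob_simplex_interior_def less_imp_le)
    have eqV: "sqrt (real T / a T) * \<bar>chat_V l a x P T - cost l x P\<bar> = sqrt (2 * V)" if T: "T \<ge> 1" for T
    proof -
      have aT: "a T > 0" using a_pos[OF T] .
      have Tp: "real T > 0" using T by simp
      have s0: "sqrt (2 * a T / real T * V) \<ge> 0" using aT Tp V0 by simp
      have "chat_V l a x P T - cost l x P = sqrt (2 * a T / real T * V)" by (simp add: chat_V_def V_def)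
      then have "\<bar>chat_V l a x P T - cost l x P\<bar> = sqrt (2 * a T / real T * V)" using s0 by simp
      then have "sqrt (real T / a T) * \<bar>chat_V l a x P T - cost l x P\<bar> = sqrt (real T / a T) * sqrt (2 * a T / real T * V)"
        by (rule arg_cong[where f="\<lambda>z. sqrt (real T / a T) * z"])
      also have "\<dots> = sqrt (real T / a T * (2 * a T / real T * V))" by (rule real_sqrt_mult[symmetric])
      also have "real T / a T * (2 * a T / real T * V) = 2 * V" using aT Tp by (simp add: field_simps)
      finally show ?thesis .
    qed
    have lim: "limsup (\<lambda>T. ereal (sqrt (real T / a T) * \<bar>chat_V l a x P T - cost l x P\<bar>)) = ereal (sqrt (2 * V))"
    proof (rule lim_imp_Limsup)
      show "(\<lambda>T. ereal (sqrt (real T / a T) * \<bar>chat_V l a x P T - cost l x P\<bar>)) \<longlonglongrightarrow> ereal (sqrt (2 * V))"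
        by (rule tendsto_eventually) (rule eventually_mono[OF eventually_ge_at_top[of 1]], simp add: eqV)
    qed simp
    have liminf: "ereal (sqrt (2 * V)) \<le> liminf (\<lambda>T. ereal (sqrt (real T / a T) * (chat x P T - cost l x P)))"
      unfolding le_Liminf_iff
    proof (intro allI impI)
      fix y assume y: "y < ereal (sqrt (2 * V))"
      then obtain z where z1: "y < ereal z" and z2: "ereal z < ereal (sqrt (2 * V))" using ereal_dense2 by blast
      have zs: "z < sqrt (2 * variance_loss l x P)" using z2 by (simp add: V_def)
      have "\<not> frequently (\<lambda>T. T \<ge> 1 \<and> chat x P T - cost l x P \<le> z * sqrt (a T / real T)) sequentially"
        using main_contra[OF x P zs] by blast
      then have ev: "eventually (\<lambda>T. \<not> (T \<ge> 1 \<and> chat x P T - cost l x P \<le> z * sqrt (a T / real T))) sequentially"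
        by (simp add: not_frequently)
      show "eventually (\<lambda>T. y < ereal (sqrt (real T / a T) * (chat x P T - cost l x P))) sequentially"
        using ev eventually_ge_at_top[of 1]
      proof eventually_elim
        case (elim T)
        then have T: "T \<ge> 1" and h: "chat x P T - cost l x P > z * sqrt (a T / real T)" by auto
        have aT: "a T > 0" using a_pos[OF T] .
        have Tp: "real T > 0" using T by simp
        have sp: "sqrt (real T / a T) > 0" using aT Tp by simp
        have "sqrt (real T / a T) * (z * sqrt (a T / real T)) < sqrt (real T / a T) * (chat x P T - cost l x P)"
          using h sp by (rule mult_strict_left_mono)
        moreover have "sqrt (real T / a T) * (z * sqrt (a T / real T)) = z"
        proof -
          have "sqrt (real T / a T) * sqrt (a T / real T) = sqrt (real T / a T * (a T / real T))"
            by (rule real_sqrt_mult[symmetric])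
          also have "real T / a T * (a T / real T) = 1" using aT Tp by simp
          finally show ?thesis by (simp add: mult_ac)
        qed
        ultimately have "z < sqrt (real T / a T) * (chat x P T - cost l x P)" by simp
        then show ?case using z1 by (simp add: order_less_trans)
      qed
    qed
    show "limsup (\<lambda>T. ereal (sqrt (real T / a T) * \<bar>chat_V l a x P T - cost l x P\<bar>))
             \<le> liminf (\<lambda>T. ereal (sqrt (real T / a T) * (chat x P T - cost l x P))) \<and>
           limsup (\<lambda>T. ereal (sqrt (real T / a T) * \<bar>chat_V l a x P T - cost l x P\<bar>))
             = ereal (sqrt (2 * variance_loss l x P))"
      using lim liminf by (simp add: V_def)
  qed
qed


end
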